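(* Let $n\ge3$, let $\delta$ be a dissimilarity map on $X=\{1,\dots,n\}$, let $\mathcal{C}=\{C_1,\dots,C_m\}$ be a partial circular ordering with $m\ge 3$ blocks equipped with the balanced TSP weighting $\mu$, and for $r\neq s$ let \[ l(\delta,\mathcal{C}_{r,s}) = \frac{1}{|o(\mathcal{C}_{r,s})|}\sum_{(y_1,\dots,y_n)\in o(\mathcal{C}_{r,s})}\frac12\sum_{k=1}^n\delta(y_k,y_{k+1}).\] Then \[ l(\delta,\mathcal{C}_{r,s}) = \frac{1}{2(m-2)}Q_\delta(C_r,C_s) + T,\qquad T=\frac12\sum_{\{i,j\}\ \text{consecutive in a block}}\delta(i,j)+\frac{1}{m-2}\sum_{1\le t<u\le m}\delta(C_t,C_u),\] where $T$ does not depend on $r,s$. In particular a pair $(r,s)$ minimizes $l(\delta,\mathcal{C}_{r,s})$ if and only if it minimizes $Q_\delta(C_r,C_s)$.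
   Context: A dissimilarity map is $\delta:X\times X\to\mathbb{R}$ with $\delta(i,j)=\delta(j,i)\ge0$, $\delta(i,i)=0$. A circular ordering of $X$ is a listing $(y_1,\dots,y_n)$ of $X$ regarded cyclically ($y_{n+1}=y_1$), identified up to rotation and reversal. A partial circular ordering $\mathcal{C}=\{C_1,\dots,C_m\}$ is a partition of $X$ into nonempty blocks each equipped with a linear order (a path, up to reversal); elements are consecutive in a block if adjacent in the path; $\hat C_r$ is the set of endpoints of $C_r$ ($C_r$ itself if $|C_r|=1$). A circular ordering is consistent with $\mathcal{C}$ if every pair consecutive in a block is adjacent in it. The balanced TSP weighting is $\mu(i)=1$ for a singleton block, $\mu(i)=1/2$ for $i\in\hat C_r$ with $|\hat C_r|=2$, $\mu(i)=0$ otherwise. Set $\delta(C_r,C_s)=\sum_{i\in C_r,j\in C_s}\mu(i)\mu(j)\delta(i,j)$ and $Q_\delta(C_r,C_s)=(m-2)\delta(C_r,C_s)-\sum_{t\ne r}\delta(C_r,C_t)-\sum_{t\ne s}\delta(C_s,C_t)$. $\mathcal{C}_{r,s}$ is the set of partial circular orderings with $m-1$ blocks obtained from $\mathcal{C}$ by joining an endpoint of $C_r$ to an endpoint of $C_s$, and $o(\mathcal{C}_{r,s})$ is the set of circular orderings consistent with at least one member of $\mathcal{C}_{r,s}$. *)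

theory Defs
  imports Main "HOL-Library.Multiset" Complex_Main
begin

definition dissim :: "nat set \<Rightarrow> (nat \<Rightarrow> nat \<Rightarrow> real) \<Rightarrow> bool" where
  "dissim X d \<longleftrightarrow> (\<forall>i\<in>X. \<forall>j\<in>X. d i j = d j i \<and> d i j \<ge> 0) \<and> (\<forall>i\<in>X. d i i = 0)"

text \<open>Circular orderings: a listing of X, regarded up to rotation and reversal,
  i.e. the equivalence class of a listing.\<close>

definition circ_class :: "'a list \<Rightarrow> 'a list set" where
  "circ_class ys = {zs. \<exists>k. zs = rotate k ys \<or> zs = rotate k (rev ys)}"

definition circ_orderings :: "'a set \<Rightarrow> 'a list set set" where
  "circ_orderings X = {circ_class ys | ys. distinct ys \<and> set ys = X}"

definition cyc_adj :: "'a list \<Rightarrow> 'a \<Rightarrow> 'a \<Rightarrow> bool" where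
  "cyc_adj ys i j \<longleftrightarrow> (\<exists>k<length ys. {ys ! k, ys ! ((k + 1) mod length ys)} = {i, j})"

definition half_tour :: "('a \<Rightarrow> 'a \<Rightarrow> real) \<Rightarrow> 'a list \<Rightarrow> real" where
  "half_tour d ys = (1/2) * (\<Sum>k<length ys. d (ys ! k) (ys ! ((k + 1) mod length ys)))"

text \<open>Value on a circular ordering (class): evaluate at a representative
  (independent of the representative).\<close>
definition class_half_tour :: "('a \<Rightarrow> 'a \<Rightarrow> real) \<Rightarrow> 'a list set \<Rightarrow> real" where
  "class_half_tour d c = half_tour d (SOME ys. ys \<in> c)"

text \<open>Partial circular orderings: a list of blocks C_1..C_m (0-indexed here),
  each block a nonempty list (a path; its reversal is the same block);
  the blocks partition X.\<close>
definition partial_circ :: "'a set \<Rightarrow> 'a list list \<Rightarrow> bool" where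
  "partial_circ X Cs \<longleftrightarrow> (\<forall>B\<in>set Cs. B \<noteq> []) \<and> distinct (concat Cs) \<and> set (concat Cs) = X"

definition consec :: "'a list \<Rightarrow> 'a \<Rightarrow> 'a \<Rightarrow> bool" where
  "consec B i j \<longleftrightarrow> (\<exists>k. k + 1 < length B \<and> i = B ! k \<and> j = B ! (k + 1))"

definition consistent :: "'a list set \<Rightarrow> 'a list list \<Rightarrow> bool" where
  "consistent c P \<longleftrightarrow> (\<exists>ys\<in>c. \<forall>B\<in>set P. \<forall>i j. consec B i j \<longrightarrow> cyc_adj ys i j)"

text \<open>C_{r,s}: join an endpoint of C_r to an endpoint of C_s; other blocks unchanged.\<close>
definition join_set :: "'a list list \<Rightarrow> nat \<Rightarrow> nat \<Rightarrow> 'a list list set" where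
  "join_set Cs r s =
     {B # [Cs ! t. t \<leftarrow> [0..<length Cs], t \<noteq> r, t \<noteq> s] | B.
        B \<in> {Cs!r @ Cs!s, Cs!r @ rev (Cs!s), rev (Cs!r) @ Cs!s, rev (Cs!r) @ rev (Cs!s)}}"

definition o_join :: "'a set \<Rightarrow> 'a list list \<Rightarrow> nat \<Rightarrow> nat \<Rightarrow> 'a list set set" where
  "o_join X Cs r s = {c \<in> circ_orderings X. \<exists>P\<in>join_set Cs r s. consistent c P}"

definition l_join :: "'a set \<Rightarrow> ('a \<Rightarrow> 'a \<Rightarrow> real) \<Rightarrow> 'a list list \<Rightarrow> nat \<Rightarrow> nat \<Rightarrow> real" where
  "l_join X d Cs r s = (1 / real (card (o_join X Cs r s))) *
      (\<Sum>c\<in>o_join X Cs r s. class_half_tour d c)"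

definition mu_block :: "'a list \<Rightarrow> 'a \<Rightarrow> real" where
  "mu_block B i = (if i \<notin> set B then 0 else if length B = 1 then 1
                   else if i = hd B \<or> i = last B then 1/2 else 0)"

definition mu :: "'a list list \<Rightarrow> 'a \<Rightarrow> real" where
  "mu Cs i = (\<Sum>B\<leftarrow>Cs. mu_block B i)"

definition blk_dist :: "('a \<Rightarrow> 'a \<Rightarrow> real) \<Rightarrow> 'a list list \<Rightarrow> nat \<Rightarrow> nat \<Rightarrow> real" where
  "blk_dist d Cs r s = (\<Sum>i\<in>set (Cs!r). \<Sum>j\<in>set (Cs!s). mu Cs i * mu Cs j * d i j)"

definition Q_delta :: "('a \<Rightarrow> 'a \<Rightarrow> real) \<Rightarrow> 'a list list \<Rightarrow> nat \<Rightarrow> nat \<Rightarrow> real" where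
  "Q_delta d Cs r s = (real (length Cs) - 2) * blk_dist d Cs r s
     - (\<Sum>t\<in>{0..<length Cs} - {r}. blk_dist d Cs r t)
     - (\<Sum>t\<in>{0..<length Cs} - {s}. blk_dist d Cs s t)"

definition T_const :: "('a \<Rightarrow> 'a \<Rightarrow> real) \<Rightarrow> 'a list list \<Rightarrow> real" where
  "T_const d Cs = (1/2) * (\<Sum>B\<leftarrow>Cs. \<Sum>k<length B - 1. d (B ! k) (B ! (k + 1)))
     + (1 / (real (length Cs) - 2)) *
       (\<Sum>u<length Cs. \<Sum>t<u. blk_dist d Cs t u)"

end

theory Submission
  imports Defs "HOL-Library.Sublist"
begin


fun pth :: "('a \<Rightarrow> 'a \<Rightarrow> real) \<Rightarrow> 'a list \<Rightarrow> real" where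
  "pth d (x # y # r) = d x y + pth d (y # r)"
| "pth d _ = 0"

definition tour :: "('a \<Rightarrow> 'a \<Rightarrow> real) \<Rightarrow> 'a list \<Rightarrow> real" where
  "tour d ys = pth d ys + d (last ys) (hd ys)"

fun ledges :: "'a list \<Rightarrow> 'a set set" where
  "ledges (x # y # r) = insert {x, y} (ledges (y # r))"
| "ledges _ = {}"

definition cedges :: "'a list \<Rightarrow> 'a set set" where
  "cedges ys = insert {last ys, hd ys} (ledges ys)"

definition symf :: "('a \<Rightarrow> 'a \<Rightarrow> real) \<Rightarrow> bool" where
  "symf d \<longleftrightarrow> (\<forall>x y. d x y = d y x)"

lemma pth_Cons: "xs \<noteq> [] \<Longrightarrow> pth d (x # xs) = d x (hd xs) + pth d xs"
  by (cases xs) auto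

lemma pth_append: "a \<noteq> [] \<Longrightarrow> b \<noteq> [] \<Longrightarrow> pth d (a @ b) = pth d a + d (last a) (hd b) + pth d b"
proof (induction a)
  case Nil then show ?case by simp
next
  case (Cons x a)
  show ?case
  proof (cases "a = []")
    case True then show ?thesis using Cons by (simp add: pth_Cons)
  next
    case False then show ?thesis using Cons by (simp add: pth_Cons)
  qed
qed

lemma pth_rev: "symf d \<Longrightarrow> pth d (rev a) = pth d a"
proof (induction a)
  case Nil then show ?case by simp
next
  case (Cons x a)
  show ?case
  proof (cases "a = []")
    case True then show ?thesis by simp
  next
    case False
    then have "pth d (rev (x # a)) = pth d (rev a) + d (last (rev a)) x"
      using pth_append[of "rev a" "[x]" d] by simp
    also have "\<dots> = pth d a + d x (hd a)" using Cons False by (simp add: last_rev symf_def)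
    finally show ?thesis using False by (simp add: pth_Cons)
  qed
qed

lemma pth_nth: "pth d B = (\<Sum>k<length B - 1. d (B ! k) (B ! (k + 1)))"
proof (induction B)
  case Nil then show ?case by simp
next
  case (Cons x B)
  show ?case
  proof (cases "B = []")
    case True then show ?thesis by simp
  next
    case False
    then obtain n where n: "length B = Suc n" by (cases B) auto
    have "(\<Sum>k<length (x # B) - 1. d ((x # B) ! k) ((x # B) ! (k + 1)))
        = (\<Sum>k<Suc n. d ((x # B) ! k) ((x # B) ! (k + 1)))" using n by simp
    also have "\<dots> = d x (B ! 0) + (\<Sum>k<n. d (B ! k) (B ! (k + 1)))"
      by (subst sum.lessThan_Suc_shift) simp
    finally show ?thesis using Cons False n by (simp add: pth_Cons hd_conv_nth)
  qed
qed

lemma half_tour_tour: "ys \<noteq> [] \<Longrightarrow> half_tour d ys = tour d ys / 2"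
proof -
  assume ne: "ys \<noteq> []"
  then obtain n where n: "length ys = Suc n" by (cases ys) auto
  have "(\<Sum>k<length ys. d (ys ! k) (ys ! ((k + 1) mod length ys)))
      = (\<Sum>k<n. d (ys ! k) (ys ! (k + 1))) + d (ys ! n) (ys ! 0)"
    using n by (simp add: sum.lessThan_Suc)
  also have "\<dots> = tour d ys"
    using n ne by (simp add: tour_def pth_nth last_conv_nth hd_conv_nth)
  finally show ?thesis by (simp add: half_tour_def)
qed

lemma tour_rotate1: "tour d (rotate1 ys) = tour d ys"
proof (cases ys)
  case Nil then show ?thesis by simp
next
  case (Cons x xs)
  show ?thesis
  proof (cases "xs = []")
    case True then show ?thesis using Cons by simp
  next
    case False
    then show ?thesis using Cons
      by (simp add: tour_def pth_append pth_Cons)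
  qed
qed

lemma tour_rotate: "tour d (rotate k ys) = tour d ys"
  by (induction k) (simp_all add: tour_rotate1)

lemma tour_rev: "symf d \<Longrightarrow> tour d (rev ys) = tour d ys"
  by (cases "ys = []") (simp_all add: tour_def pth_rev hd_rev last_rev symf_def)

lemma ledges_Cons: "xs \<noteq> [] \<Longrightarrow> ledges (x # xs) = insert {x, hd xs} (ledges xs)"
  by (cases xs) auto

lemma ledges_append: "a \<noteq> [] \<Longrightarrow> b \<noteq> [] \<Longrightarrow> ledges (a @ b) = ledges a \<union> {{last a, hd b}} \<union> ledges b"
proof (induction a)
  case Nil then show ?case by simp
next
  case (Cons x a)
  show ?case
  proof (cases "a = []")
    case True then show ?thesis using Cons by (simp add: ledges_Cons)
  next
    case False then show ?thesis using Cons by (auto simp add: ledges_Cons)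
  qed
qed

lemma ledges_rev: "ledges (rev a) = ledges a"
proof (induction a)
  case Nil then show ?case by simp
next
  case (Cons x a)
  show ?case
  proof (cases "a = []")
    case True then show ?thesis by simp
  next
    case False
    then have "ledges (rev (x # a)) = ledges (rev a) \<union> {{last (rev a), x}}"
      using ledges_append[of "rev a" "[x]"] by simp
    then show ?thesis using Cons False by (auto simp add: last_rev ledges_Cons insert_commute)
  qed
qed

lemma ledges_nth: "ledges B = {{B ! k, B ! (k + 1)} | k. k + 1 < length B}"
proof (induction B)
  case Nil then show ?case by simp
next
  case (Cons x B)
  show ?case
  proof (cases "B = []")
    case True then show ?thesis by simp
  next
    case False
    have "{{(x # B) ! k, (x # B) ! (k + 1)} | k. k + 1 < length (x # B)}
       = insert {x, B ! 0} {{B ! k, B ! (k + 1)} | k. k + 1 < length B}"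
      (is "?L = ?R")
    proof
      show "?L \<subseteq> ?R"
      proof
        fix e assume "e \<in> ?L"
        then obtain k where k: "e = {(x # B) ! k, (x # B) ! (k + 1)}" "k + 1 < length (x # B)" by blast
        show "e \<in> ?R"
        proof (cases k)
          case 0 then show ?thesis using k by simp
        next
          case (Suc j) then show ?thesis using k by auto
        qed
      qed
    next
      show "?R \<subseteq> ?L"
      proof
        fix e assume "e \<in> ?R"
        then consider "e = {x, B ! 0}" | k where "e = {B ! k, B ! (k + 1)}" "k + 1 < length B" by blast
        then show "e \<in> ?L"
        proof cases
          case 1 then show ?thesis using False
            by (auto intro!: exI[of _ 0])
        next
          case 2 then show ?thesis by (auto intro!: exI[of _ "Suc k"])
        qed
      qed
    qed
    then show ?thesis using Cons False by (simp add: ledges_Cons hd_conv_nth)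
  qed
qed

lemma ledges_subset: "e \<in> ledges B \<Longrightarrow> e \<subseteq> set B"
  by (auto simp: ledges_nth)

lemma consec_ledges: "consec B i j \<Longrightarrow> {i, j} \<in> ledges B"
  unfolding consec_def ledges_nth by blast

lemma cyc_adj_cedges: "ys \<noteq> [] \<Longrightarrow> cyc_adj ys i j \<longleftrightarrow> {i, j} \<in> cedges ys"
proof -
  assume ne: "ys \<noteq> []"
  then obtain n where n: "length ys = Suc n" by (cases ys) auto
  have "cyc_adj ys i j \<longleftrightarrow> (\<exists>k<Suc n. {ys ! k, ys ! ((k + 1) mod Suc n)} = {i, j})"
    using n by (simp add: cyc_adj_def)
  also have "\<dots> \<longleftrightarrow> ((\<exists>k<n. {ys ! k, ys ! (k + 1)} = {i, j}) \<or> {ys ! n, ys ! 0} = {i, j})"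
  proof
    assume "\<exists>k<Suc n. {ys ! k, ys ! ((k + 1) mod Suc n)} = {i, j}"
    then obtain k where k: "k < Suc n" "{ys ! k, ys ! ((k + 1) mod Suc n)} = {i, j}" by blast
    show "(\<exists>k<n. {ys ! k, ys ! (k + 1)} = {i, j}) \<or> {ys ! n, ys ! 0} = {i, j}"
    proof (cases "k = n")
      case True then show ?thesis using k by simp
    next
      case False then have "k < n" using k by simp
      then show ?thesis using k by auto
    qed
  next
    assume "(\<exists>k<n. {ys ! k, ys ! (k + 1)} = {i, j}) \<or> {ys ! n, ys ! 0} = {i, j}"
    then show "\<exists>k<Suc n. {ys ! k, ys ! ((k + 1) mod Suc n)} = {i, j}"
    proof
      assume "\<exists>k<n. {ys ! k, ys ! (k + 1)} = {i, j}"
      then obtain k where "k < n" "{ys ! k, ys ! (k + 1)} = {i, j}" by blast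
      then show ?thesis by (intro exI[of _ k]) auto
    next
      assume "{ys ! n, ys ! 0} = {i, j}" then show ?thesis by (intro exI[of _ n]) auto
    qed
  qed
  also have "\<dots> \<longleftrightarrow> {i, j} \<in> cedges ys"
    using n ne by (auto simp: cedges_def ledges_nth last_conv_nth hd_conv_nth)
  finally show ?thesis .
qed

lemma cedges_rotate1: "cedges (rotate1 ys) = cedges ys"
proof (cases ys)
  case Nil then show ?thesis by simp
next
  case (Cons x xs)
  show ?thesis
  proof (cases "xs = []")
    case True then show ?thesis using Cons by simp
  next
    case False
    then show ?thesis using Cons
      by (auto simp add: cedges_def ledges_append ledges_Cons insert_commute)
  qed
qed

lemma cedges_rotate: "cedges (rotate k ys) = cedges ys"
  by (induction k) (simp_all add: cedges_rotate1)

lemma cedges_rev: "cedges (rev ys) = cedges ys"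
  by (cases "ys = []") (auto simp add: cedges_def ledges_rev hd_rev last_rev)


lemma rev_rotate_ex: "rev (rotate j xs) = rotate (length xs - j mod length xs) (rev xs)"
proof (cases "xs = []")
  case True then show ?thesis by simp
next
  case False
  define L where "L = length xs"
  have L: "L > 0" using False by (simp add: L_def)
  have "rotate (L - j mod L) (rev xs) = rev (rotate (L - (L - j mod L) mod L) xs)"
    by (simp add: rotate_rev L_def)
  also have "rotate (L - (L - j mod L) mod L) xs = rotate j xs"
  proof -
    have "(L - (L - j mod L) mod L) mod L = j mod L"
    proof (cases "j mod L = 0")
      case True then show ?thesis using L by simp
    next
      case False
      then have "L - j mod L < L" using L by simp
      then have "(L - j mod L) mod L = L - j mod L" by simp
      then show ?thesis using L by (simp add: le_less mod_less_divisor)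
    qed
    then show ?thesis
      by (metis L_def rotate_conv_mod)
  qed
  finally show ?thesis by (simp add: L_def)
qed

lemma class_self: "ys \<in> circ_class ys"
  unfolding circ_class_def by (auto intro: exI[of _ 0])

lemma class_rotate: "zs \<in> circ_class ys \<Longrightarrow> rotate k zs \<in> circ_class ys"
  unfolding circ_class_def by (auto simp: rotate_rotate)

lemma class_rev: "zs \<in> circ_class ys \<Longrightarrow> rev zs \<in> circ_class ys"
proof -
  assume "zs \<in> circ_class ys"
  then obtain k where k: "zs = rotate k ys \<or> zs = rotate k (rev ys)" by (auto simp: circ_class_def)
  then show ?thesis
  proof
    assume "zs = rotate k ys"
    then have "rev zs = rotate (length ys - k mod length ys) (rev ys)" by (simp add: rev_rotate_ex)
    then show ?thesis unfolding circ_class_def by blast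
  next
    assume "zs = rotate k (rev ys)"
    then have "rev zs = rotate (length ys - k mod length ys) (rev (rev ys))"
      using rev_rotate_ex[of k "rev ys"] by simp
    then show ?thesis unfolding circ_class_def by auto
  qed
qed

lemma rotate_inv: "rotate (length ys - k mod length ys) (rotate k ys) = ys"
proof (cases "ys = []")
  case True then show ?thesis by simp
next
  case False
  define L where "L = length ys"
  have L: "L > 0" using False by (simp add: L_def)
  have "k mod L \<le> k" by simp
  have "L - k mod L + k = L + k div L * L"
    using div_mult_mod_eq[of k L] mod_less_divisor[OF L, of k] by linarith
  then have "(L - k mod L + k) mod L = 0" by simp
  then have "rotate (L - k mod L + k) ys = ys"
    by (metis L_def rotate_conv_mod rotate0 id_apply)
  then show ?thesis by (simp add: rotate_rotate L_def)
qed

lemma class_sym: "zs \<in> circ_class ys \<Longrightarrow> ys \<in> circ_class zs"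
proof -
  assume "zs \<in> circ_class ys"
  then obtain k where k: "zs = rotate k ys \<or> zs = rotate k (rev ys)" by (auto simp: circ_class_def)
  then show ?thesis
  proof
    assume "zs = rotate k ys"
    then have "ys = rotate (length ys - k mod length ys) zs" by (simp add: rotate_inv)
    then show ?thesis unfolding circ_class_def by blast
  next
    assume z: "zs = rotate k (rev ys)"
    then have "rev zs = rotate (length ys - k mod length ys) ys"
      using rev_rotate_ex[of k "rev ys"] by simp
    then have "ys = rotate (length ys - (length ys - k mod length ys) mod length ys) (rev zs)"
      using rotate_inv[of ys "length ys - k mod length ys"] by simp
    then show ?thesis unfolding circ_class_def by blast
  qed
qed

lemma class_eq: "zs \<in> circ_class ys \<Longrightarrow> circ_class zs = circ_class ys"
proof
  assume z: "zs \<in> circ_class ys"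
  show "circ_class zs \<subseteq> circ_class ys"
  proof
    fix x assume "x \<in> circ_class zs"
    then obtain k where "x = rotate k zs \<or> x = rotate k (rev zs)" by (auto simp: circ_class_def)
    then show "x \<in> circ_class ys" using z class_rotate class_rev by metis
  qed
  have y: "ys \<in> circ_class zs" using class_sym z .
  show "circ_class ys \<subseteq> circ_class zs"
  proof
    fix x assume "x \<in> circ_class ys"
    then obtain k where "x = rotate k ys \<or> x = rotate k (rev ys)" by (auto simp: circ_class_def)
    then show "x \<in> circ_class zs" using y class_rotate class_rev by metis
  qed
qed

lemma class_props:
  assumes "zs \<in> circ_class ys"
  shows "set zs = set ys" "distinct zs = distinct ys" "length zs = length ys"
    "cedges zs = cedges ys" "symf d \<Longrightarrow> tour d zs = tour d ys"
  using assms by (auto simp: circ_class_def cedges_rotate cedges_rev tour_rotate tour_rev)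

lemma cedges_append: "a \<noteq> [] \<Longrightarrow> b \<noteq> [] \<Longrightarrow>
   cedges (a @ b) = insert {last b, hd a} (ledges a \<union> {{last a, hd b}} \<union> ledges b)"
  by (simp add: cedges_def ledges_append)

lemma next_elem:
  assumes "distinct (Q @ rest)" "Q \<noteq> []" "rest \<noteq> []" "y \<notin> set Q"
    "{last Q, y} \<in> cedges (Q @ rest)"
  shows "y = hd rest \<or> (length Q = 1 \<and> y = last rest)"
proof -
  have lQ: "last Q \<in> set Q" using assms(2) by simp
  have lr: "last Q \<notin> set rest" using assms(1) lQ by auto
  have hQ: "hd Q \<in> set Q" using assms(2) by simp
  have hr: "last rest \<in> set rest" using assms(3) by simp
  consider "{last Q, y} = {last rest, hd Q}" | "{last Q, y} \<in> ledges Q"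
    | "{last Q, y} = {last Q, hd rest}" | "{last Q, y} \<in> ledges rest"
    using assms(5) cedges_append[OF assms(2,3)] by auto
  then show ?thesis
  proof cases
    case 1
    then have "last Q = hd Q" "y = last rest" using lr hr by (auto simp: doubleton_eq_iff)
    moreover have "length Q = 1"
    proof (rule ccontr)
      assume "length Q \<noteq> 1"
      then have "length Q \<ge> 2" using assms(2) length_greater_0_conv[of Q] by linarith
      moreover have "distinct Q" using assms(1) by simp
      have i: "0 < length Q" "length Q - 1 < length Q" using \<open>length Q \<ge> 2\<close> by auto
      have "Q ! 0 = Q ! (length Q - 1) \<longleftrightarrow> 0 = length Q - 1"
        using nth_eq_iff_index_eq[OF \<open>distinct Q\<close> i] .
      then have "Q ! 0 \<noteq> Q ! (length Q - 1)" using \<open>length Q \<ge> 2\<close> by auto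
      then show False using \<open>last Q = hd Q\<close> assms(2) by (simp add: hd_conv_nth last_conv_nth)
    qed
    ultimately show ?thesis by simp
  next
    case 2 then have "y \<in> set Q" using ledges_subset by blast
    then show ?thesis using assms(4) by simp
  next
    case 3 then show ?thesis using assms(4) lQ by (auto simp: doubleton_eq_iff)
  next
    case 4 then have "last Q \<in> set rest" using ledges_subset by blast
    then show ?thesis using lr by simp
  qed
qed

lemma seg:
  assumes "distinct ys" "Q \<noteq> []" "distinct Q" "set Q \<subseteq> set ys" "length Q < length ys"
    "ledges Q \<subseteq> cedges ys"
  shows "\<exists>zs\<in>circ_class ys. \<exists>rest. zs = Q @ rest"
  using assms
proof (induction Q rule: rev_induct)
  case Nil then show ?case by simp
next
  case (snoc y Q)
  show ?case
  proof (cases "Q = []")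
    case True
    then have "y \<in> set ys" using snoc by simp
    then obtain a b where ab: "ys = a @ y # b" by (meson split_list)
    have "rotate (length a) ys = (y # b) @ a" using ab by (simp add: rotate_append)
    then show ?thesis using True class_rotate[OF class_self] by (metis append_Cons append_Nil)
  next
    case False
    have le: "ledges (Q @ [y]) = ledges Q \<union> {{last Q, y}}"
      using ledges_append[OF False, of "[y]"] by simp
    have "\<exists>zs\<in>circ_class ys. \<exists>rest. zs = Q @ rest"
      using snoc.IH[OF snoc.prems(1) False] snoc.prems le by auto
    then obtain zs rest where zs: "zs \<in> circ_class ys" "zs = Q @ rest" by blast
    have props: "distinct zs" "length zs = length ys" "cedges zs = cedges ys"
      using class_props[OF zs(1)] snoc.prems(1) by auto
    have rne: "rest \<noteq> []" using props(2) zs(2) snoc.prems(5) by auto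
    have yQ: "y \<notin> set Q" using snoc.prems(3) by simp
    have e: "{last Q, y} \<in> cedges (Q @ rest)" using snoc.prems(6) le props(3) zs(2) by auto
    from next_elem[OF _ False rne yQ e] props(1) zs(2)
    consider "y = hd rest" | "length Q = 1" "y = last rest" by auto
    then show ?thesis
    proof cases
      case 1
      then have "zs = (Q @ [y]) @ tl rest" using zs(2) rne by simp
      then show ?thesis using zs(1) by blast
    next
      case 2
      then obtain x where x: "Q = [x]" by (cases Q) (auto simp: length_Suc_conv)
      have "rev zs = rev rest @ [x]" using zs(2) x by simp
      then have "rotate (length rest) (rev zs) = [x] @ rev rest"
        by (metis length_rev rotate_append)
      also have "rev rest = y # tl (rev rest)" using 2 rne
        by (metis hd_rev list.collapse rev_is_Nil_conv)
      finally have "rotate (length rest) (rev zs) = (Q @ [y]) @ tl (rev rest)" using x by simp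
      moreover have "rotate (length rest) (rev zs) \<in> circ_class ys"
        using class_rotate[OF class_rev[OF zs(1)]] .
      ultimately show ?thesis by metis
    qed
  qed
qed

lemma prefix_rotate_sublist:
  assumes "prefix Q (rotate k (A @ C))" "Q \<noteq> []" "A \<noteq> []" "set Q \<inter> set A = {}"
  shows "sublist Q C"
proof -
  define L where "L = length (A @ C)"
  define k' where "k' = k mod L"
  have L: "L > 0" using assms(3) by (simp add: L_def)
  have kL: "k' < L" using L by (simp add: k'_def)
  have rot: "rotate k (A @ C) = drop k' (A @ C) @ take k' (A @ C)"
    by (simp add: rotate_drop_take k'_def L_def)
  show ?thesis
  proof (cases "k' < length A")
    case True
    then have "drop k' (A @ C) = drop k' A @ C" by simp
    moreover have "drop k' A \<noteq> []" using True by simp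
    ultimately have "hd (rotate k (A @ C)) = hd (drop k' A)" using rot by simp
    moreover have "hd (drop k' A) \<in> set A" using \<open>drop k' A \<noteq> []\<close>
      by (meson hd_in_set in_set_dropD)
    moreover have "hd Q = hd (rotate k (A @ C))" using assms(1,2)
      by (metis hd_append2 prefix_def)
    ultimately have "hd Q \<in> set A" by simp
    then show ?thesis using assms(2,4) by (meson disjoint_iff hd_in_set)
  next
    case False
    define j where "j = k' - length A"
    have "drop k' (A @ C) = drop j C" using False by (simp add: j_def)
    moreover have "take k' (A @ C) = A @ take j C" using False by (simp add: j_def)
    ultimately have r: "rotate k (A @ C) = drop j C @ (A @ take j C)" using rot by simp
    have "prefix Q (drop j C) \<or> (\<exists>us. Q = drop j C @ us \<and> prefix us (A @ take j C))"
      using assms(1) unfolding r by (simp only: prefix_append[of Q "drop j C"])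
    then show ?thesis
    proof
      assume "prefix Q (drop j C)"
      then show ?thesis
        by (metis append_take_drop_id prefix_imp_sublist sublist_append_leftI sublist_order.order_trans)
    next
      assume "\<exists>us. Q = drop j C @ us \<and> prefix us (A @ take j C)"
      then obtain us where us: "Q = drop j C @ us" "prefix us (A @ take j C)" by blast
      show ?thesis
      proof (cases "us = []")
        case True then show ?thesis using us
          by (metis append_Nil2 append_take_drop_id sublist_append_leftI)
      next
        case False
        then have "hd us = hd A" using us(2) assms(3)
          by (metis hd_append2 prefix_def)
        then have "hd A \<in> set Q" using False us(1) by (metis Un_iff hd_in_set set_append)
        then show ?thesis using assms(3,4) by (meson disjoint_iff hd_in_set)
      qed
    qed
  qed
qed

lemma rotate_fix:
  assumes "distinct (A @ C)" "A \<noteq> []" "C \<noteq> []" "rotate k (A @ C) = A' @ C'"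
    "length A' = length A" "set A' = set A"
  shows "rotate k (A @ C) = A @ C"
proof -
  define L where "L = length (A @ C)"
  define k' where "k' = k mod L"
  have L: "L > 0" using assms(2) by (simp add: L_def)
  have kL: "k' < L" using L by (simp add: k'_def)
  have rot: "rotate k (A @ C) = drop k' (A @ C) @ take k' (A @ C)"
    by (simp add: rotate_drop_take k'_def L_def)
  have tk: "take (length A) (rotate k (A @ C)) = A'" using assms(4,5) by simp
  consider "k' = 0" | "0 < k'" "k' < length A" | "length A \<le> k'" by linarith
  then show ?thesis
  proof cases
    case 1 then show ?thesis using rot by simp
  next
    case 2
    have "rotate k (A @ C) = drop k' A @ (C @ take k' A)" using rot 2 by simp
    then have "take (length A) (rotate k (A @ C)) = drop k' A @ take k' (C @ take k' A)"
      using 2 by simp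
    moreover have "hd C \<in> set (take k' (C @ take k' A))" using 2 assms(3)
      by (metis hd_append2 hd_in_set hd_take take_eq_Nil not_gr0 append_is_Nil_conv)
    ultimately have "hd C \<in> set A'" using tk by simp
    then have "hd C \<in> set A" using assms(6) by simp
    then show ?thesis using assms(1,3) by (meson disjoint_iff distinct_append hd_in_set)
  next
    case 3
    define j where "j = k' - length A"
    have "drop k' (A @ C) = drop j C" using 3 by (simp add: j_def)
    moreover have "take k' (A @ C) = A @ take j C" using 3 by (simp add: j_def)
    ultimately have r: "rotate k (A @ C) = drop j C @ (A @ take j C)" using rot by simp
    have dne: "drop j C \<noteq> []" using kL 3 by (simp add: j_def L_def)
    have "hd (rotate k (A @ C)) = hd (drop j C)" using r dne by simp
    moreover have "hd (drop j C) \<in> set C" using dne by (meson hd_in_set in_set_dropD)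
    moreover have "A' \<noteq> []" using assms(2,5) by auto
    then have "hd (rotate k (A @ C)) = hd A'" using assms(4) by simp
    moreover have "hd A' \<in> set A" using \<open>A' \<noteq> []\<close> assms(6) by (metis hd_in_set)
    ultimately show ?thesis using assms(1) by auto
  qed
qed


definition Or :: "'a list \<Rightarrow> 'a list set" where "Or B = {B, rev B}"

definition Arr :: "(nat \<Rightarrow> 'a list) \<Rightarrow> nat set \<Rightarrow> 'a list list set" where
  "Arr blk K = {ws. \<exists>ts. distinct ts \<and> set ts = K \<and> list_all2 (\<lambda>w t. w \<in> Or (blk t)) ws ts}"

definition wfb :: "(nat \<Rightarrow> 'a list) \<Rightarrow> nat set \<Rightarrow> bool" where
  "wfb blk U \<longleftrightarrow> (\<forall>t\<in>U. blk t \<noteq> [] \<and> distinct (blk t)) \<and>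
     (\<forall>t\<in>U. \<forall>u\<in>U. t \<noteq> u \<longrightarrow> set (blk t) \<inter> set (blk u) = {})"

lemma Or_props:
  assumes "w \<in> Or B"
  shows "set w = set B" "length w = length B" "distinct w = distinct B" "(w = []) = (B = [])"
    "ledges w = ledges B" "symf d \<Longrightarrow> pth d w = pth d B"
  using assms by (auto simp: Or_def ledges_rev pth_rev)

lemma Or_self: "B \<in> Or B" by (simp add: Or_def)
lemma Or_finite: "finite (Or B)" by (simp add: Or_def)

lemma wfb_same:
  assumes "wfb blk U" "t \<in> U" "u \<in> U" "x \<in> set (blk t)" "x \<in> set (blk u)"
  shows "t = u"
  using assms unfolding wfb_def by blast

lemma Arr_empty: "Arr blk {} = {[]}"
  by (auto simp: Arr_def)

lemma Nil_Arr: "[] \<in> Arr blk K \<longleftrightarrow> K = {}"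
  by (auto simp: Arr_def)

lemma Cons_Arr: "w # ws \<in> Arr blk K \<longleftrightarrow> (\<exists>t\<in>K. w \<in> Or (blk t) \<and> ws \<in> Arr blk (K - {t}))"
proof
  assume "w # ws \<in> Arr blk K"
  then obtain ts where ts: "distinct ts" "set ts = K" "list_all2 (\<lambda>w t. w \<in> Or (blk t)) (w # ws) ts"
    by (auto simp: Arr_def)
  then obtain t ts' where t: "ts = t # ts'" by (cases ts) auto
  have "set ts' = K - {t}" using ts t by auto
  then show "\<exists>t\<in>K. w \<in> Or (blk t) \<and> ws \<in> Arr blk (K - {t})"
    using ts t unfolding Arr_def by auto
next
  assume "\<exists>t\<in>K. w \<in> Or (blk t) \<and> ws \<in> Arr blk (K - {t})"
  then obtain t ts where t: "t \<in> K" "w \<in> Or (blk t)" "distinct ts" "set ts = K - {t}"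
    "list_all2 (\<lambda>w t. w \<in> Or (blk t)) ws ts" by (auto simp: Arr_def)
  then show "w # ws \<in> Arr blk K" unfolding Arr_def
    by (intro CollectI exI[of _ "t # ts"]) auto
qed

lemma Arr_set: "ws \<in> Arr blk K \<Longrightarrow> set (concat ws) = (\<Union>t\<in>K. set (blk t))"
proof (induction ws arbitrary: K)
  case Nil then show ?case by (simp add: Nil_Arr)
next
  case (Cons w ws)
  then obtain t where t: "t \<in> K" "w \<in> Or (blk t)" "ws \<in> Arr blk (K - {t})" by (auto simp: Cons_Arr)
  then have "set (concat (w # ws)) = set (blk t) \<union> (\<Union>u\<in>K - {t}. set (blk u))"
    using Cons.IH[OF t(3)] Or_props(1)[OF t(2)] by simp
  then show ?case using t(1) by blast
qed

lemma Arr_len: "ws \<in> Arr blk K \<Longrightarrow> length ws = card K"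
  by (auto simp: Arr_def list_all2_lengthD distinct_card)

lemma Arr_elems: "ws \<in> Arr blk K \<Longrightarrow> w \<in> set ws \<Longrightarrow> \<exists>t\<in>K. w \<in> Or (blk t)"
proof (induction ws arbitrary: K)
  case Nil then show ?case by simp
next
  case (Cons w' ws)
  then obtain t where t: "t \<in> K" "w' \<in> Or (blk t)" "ws \<in> Arr blk (K - {t})" by (auto simp: Cons_Arr)
  then show ?case using Cons by auto
qed

lemma Arr_finite: "finite K \<Longrightarrow> finite (Arr blk K)"
proof -
  assume f: "finite K"
  have "Arr blk K \<subseteq> {ws. set ws \<subseteq> (\<Union>t\<in>K. Or (blk t)) \<and> length ws = card K}"
  proof
    fix ws assume ws: "ws \<in> Arr blk K"
    have "set ws \<subseteq> (\<Union>t\<in>K. Or (blk t))"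
    proof
      fix w assume "w \<in> set ws"
      then show "w \<in> (\<Union>t\<in>K. Or (blk t))" using Arr_elems[OF ws] by blast
    qed
    then show "ws \<in> {ws. set ws \<subseteq> (\<Union>t\<in>K. Or (blk t)) \<and> length ws = card K}"
      using Arr_len[OF ws] by simp
  qed
  moreover have "finite {ws. set ws \<subseteq> (\<Union>t\<in>K. Or (blk t)) \<and> length ws = card K}"
    using f by (intro finite_lists_length_eq) (simp add: Or_finite)
  ultimately show ?thesis by (rule finite_subset)
qed

lemma Arr_distinct:
  assumes "wfb blk U" "K \<subseteq> U" "ws \<in> Arr blk K"
  shows "distinct (concat ws)"
  using assms(2,3)
proof (induction ws arbitrary: K)
  case Nil then show ?case by simp
next
  case (Cons w ws)
  then obtain t where t: "t \<in> K" "w \<in> Or (blk t)" "ws \<in> Arr blk (K - {t})" by (auto simp: Cons_Arr)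
  have d1: "distinct w" using t assms(1) Cons.prems Or_props(3) unfolding wfb_def by blast
  have d2: "distinct (concat ws)" using Cons.IH[of "K - {t}"] Cons.prems t by auto
  have "set w \<inter> set (concat ws) = {}"
  proof -
    have "set (concat ws) = (\<Union>u\<in>K - {t}. set (blk u))" using Arr_set t(3) .
    moreover have "set w = set (blk t)" using Or_props(1)[OF t(2)] .
    ultimately show ?thesis using assms(1) Cons.prems t(1) unfolding wfb_def by blast
  qed
  then show ?case using d1 d2 by simp
qed

lemma sublist_skip:
  assumes "sublist w' (w @ b)" "w' \<noteq> []" "set w' \<inter> set w = {}"
  shows "sublist w' b"
proof -
  have "sublist w' w \<or> sublist w' b \<or> (\<exists>xs1 xs2. w' = xs1 @ xs2 \<and> suffix xs1 w \<and> prefix xs2 b)"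
    using assms(1) sublist_append by metis
  then show ?thesis
  proof (elim disjE exE conjE)
    assume "sublist w' w"
    then have "set w' \<subseteq> set w" by (meson set_mono_sublist)
    then have "set w' = {}" using assms(3) by (simp add: Int_absorb2)
    then show ?thesis using assms(2) by simp
  next
    assume "sublist w' b" then show ?thesis .
  next
    fix xs1 xs2 assume 3: "w' = xs1 @ xs2" "suffix xs1 w" "prefix xs2 b"
    show ?thesis
    proof (cases "xs1 = []")
      case True then show ?thesis using 3(1,3) prefix_imp_sublist by (metis append_Nil)
    next
      case False
      then have "hd xs1 \<in> set xs1" by simp
      then have "hd xs1 \<in> set w" using 3(2) set_mono_suffix by blast
      moreover have "hd xs1 \<in> set w'" using False 3(1) by simp
      ultimately show ?thesis using assms(3) by auto
    qed
  qed
qed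

lemma arr_of_sublists:
  assumes "wfb blk U" "finite K" "K \<subseteq> U"
  shows "\<forall>rest. distinct rest \<longrightarrow> set rest = (\<Union>t\<in>K. set (blk t)) \<longrightarrow>
           (\<forall>t\<in>K. \<exists>w\<in>Or (blk t). sublist w rest) \<longrightarrow> rest \<in> concat ` Arr blk K"
  using assms(2)
proof (induction K rule: finite_remove_induct)
  case empty
  then show ?case by (auto simp: Arr_empty)
next
  case (remove A)
  show ?case
  proof (intro allI impI)
    fix rest :: "'a list"
    assume r: "distinct rest" "set rest = (\<Union>t\<in>A. set (blk t))"
      "\<forall>t\<in>A. \<exists>w\<in>Or (blk t). sublist w rest"
    have AU: "A \<subseteq> U" using remove.hyps(3) assms(3) by blast
    obtain t0 where t0: "t0 \<in> A" using remove.hyps(2) by blast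
    have "blk t0 \<noteq> []" using assms(1) AU t0 unfolding wfb_def by blast
    then have "set rest \<noteq> {}" using r(2) t0 by auto
    then obtain x rest' where xr: "rest = x # rest'" by (cases rest) auto
    then have "x \<in> (\<Union>t\<in>A. set (blk t))" using r(2) by auto
    then obtain t where t: "t \<in> A" "x \<in> set (blk t)" by blast
    obtain w where w: "w \<in> Or (blk t)" "sublist w rest" using r(3) t(1) by blast
    obtain a b where ab: "rest = a @ w @ b" using w(2) by (auto simp: sublist_def)
    have xw: "x \<in> set w" using t(2) Or_props(1)[OF w(1)] by simp
    have a: "a = []"
    proof (rule ccontr)
      assume "a \<noteq> []"
      then have "x \<in> set a" using ab xr by (cases a) auto
      then show False using xw r(1) ab by auto
    qed
    then have rb: "rest = w @ b" using ab by simp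
    have wne: "w \<noteq> []" using w(1) t AU assms(1) Or_props(4) unfolding wfb_def by blast
    have setw: "set w = set (blk t)" using Or_props(1)[OF w(1)] .
    have "\<forall>u\<in>A - {t}. \<exists>w'\<in>Or (blk u). sublist w' b"
    proof
      fix u assume u: "u \<in> A - {t}"
      then obtain w' where w': "w' \<in> Or (blk u)" "sublist w' rest" using r(3) by blast
      have "w' \<noteq> []" using w'(1) u AU assms(1) Or_props(4) unfolding wfb_def by blast
      moreover have "set w' \<inter> set w = {}"
        using Or_props(1)[OF w'(1)] setw u t AU assms(1) unfolding wfb_def by blast
      ultimately have "sublist w' b" using sublist_skip w'(2) rb by metis
      then show "\<exists>w'\<in>Or (blk u). sublist w' b" using w'(1) by blast
    qed
    moreover have "distinct b" using r(1) rb by simp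
    moreover have "set b = (\<Union>u\<in>A - {t}. set (blk u))"
    proof -
      have "set b = set rest - set w" using r(1) rb by auto
      also have "\<dots> = (\<Union>u\<in>A. set (blk u)) - set (blk t)" using r(2) setw by simp
      also have "\<dots> = (\<Union>u\<in>A - {t}. set (blk u))"
        using t(1) AU assms(1) unfolding wfb_def by blast
      finally show ?thesis .
    qed
    ultimately have "b \<in> concat ` Arr blk (A - {t})" using remove.IH[OF t(1)] by blast
    then obtain ws where ws: "ws \<in> Arr blk (A - {t})" "b = concat ws" by blast
    have "w # ws \<in> Arr blk A" using Cons_Arr t(1) w(1) ws(1) by blast
    moreover have "rest = concat (w # ws)" using rb ws(2) by simp
    ultimately show "rest \<in> concat ` Arr blk A" by blast
  qed
qed

lemma wfb_Or:
  assumes "wfb blk U" "t \<in> U" "w \<in> Or (blk t)"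
  shows "w \<noteq> []" "distinct w" "set w = set (blk t)"
proof -
  have "blk t \<noteq> []" "distinct (blk t)" using assms(1,2) unfolding wfb_def by auto
  then show "w \<noteq> []" "distinct w" "set w = set (blk t)" using Or_props[OF assms(3)] by auto
qed

lemma concat_Arr_inj:
  assumes "wfb blk U" "K \<subseteq> U" "K' \<subseteq> U" "ws1 \<in> Arr blk K" "ws2 \<in> Arr blk K'"
    "concat ws1 = concat ws2"
  shows "ws1 = ws2"
  using assms(2-6)
proof (induction ws1 arbitrary: K K' ws2)
  case Nil
  show ?case
  proof (cases ws2)
    case Nil then show ?thesis by simp
  next
    case (Cons w ws)
    then obtain t where t: "t \<in> K'" "w \<in> Or (blk t)" using Nil.prems(4) by (auto simp: Cons_Arr)
    have "t \<in> U" using t(1) Nil.prems(2) by auto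
    then have "w \<noteq> []" using wfb_Or(1)[OF assms(1) _ t(2)] by simp
    then show ?thesis using Nil.prems(5) Cons by simp
  qed
next
  case (Cons w1 ws1)
  obtain t1 where t1: "t1 \<in> K" "w1 \<in> Or (blk t1)" "ws1 \<in> Arr blk (K - {t1})"
    using Cons.prems(3) by (auto simp: Cons_Arr)
  have t1U: "t1 \<in> U" using t1(1) Cons.prems(1) by auto
  have w1ne: "w1 \<noteq> []" using wfb_Or(1)[OF assms(1) t1U t1(2)] .
  show ?case
  proof (cases ws2)
    case Nil
    then show ?thesis using Cons.prems(5) w1ne by simp
  next
    case (Cons w2 ws2')
    obtain t2 where t2: "t2 \<in> K'" "w2 \<in> Or (blk t2)" "ws2' \<in> Arr blk (K' - {t2})"
      using Cons.prems(4) \<open>ws2 = w2 # ws2'\<close> by (auto simp: Cons_Arr)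
    have t2U: "t2 \<in> U" using t2(1) Cons.prems(2) by auto
    have w2ne: "w2 \<noteq> []" using wfb_Or(1)[OF assms(1) t2U t2(2)] .
    have eq: "w1 @ concat ws1 = w2 @ concat ws2'" using Cons.prems(5) \<open>ws2 = w2 # ws2'\<close> by simp
    then have "hd w1 = hd w2" using w1ne w2ne by (metis hd_append2)
    moreover have "hd w1 \<in> set (blk t1)" using w1ne wfb_Or(3)[OF assms(1) t1U t1(2)] by (metis hd_in_set)
    moreover have "hd w2 \<in> set (blk t2)" using w2ne wfb_Or(3)[OF assms(1) t2U t2(2)] by (metis hd_in_set)
    ultimately have "t1 = t2" using wfb_same[OF assms(1) t1U t2U] by metis
    then have "length w1 = length w2" using Or_props(2) t1(2) t2(2) by metis
    then have "w1 = w2" "concat ws1 = concat ws2'" using eq by auto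
    moreover have "K - {t1} \<subseteq> U" "K' - {t2} \<subseteq> U" using Cons.prems(1,2) by auto
    ultimately have "ws1 = ws2'" using Cons.IH[OF _ _ t1(3) t2(3)] by metis
    then show ?thesis using \<open>ws2 = w2 # ws2'\<close> \<open>w1 = w2\<close> by simp
  qed
qed

lemma Arr_sum:
  assumes "wfb blk U" "finite K" "K \<subseteq> U" "K \<noteq> {}"
  shows "(\<Sum>ws\<in>Arr blk K. F ws) = (\<Sum>t\<in>K. \<Sum>w\<in>Or (blk t). \<Sum>ws\<in>Arr blk (K - {t}). F (w # ws))"
proof -
  define H where "H = Sigma K (\<lambda>t. Or (blk t) \<times> Arr blk (K - {t}))"
  define g where "g = (\<lambda>(t :: nat, w :: 'a list, ws :: 'a list list). w # ws)"
  have img: "Arr blk K = g ` H"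
  proof
    show "Arr blk K \<subseteq> g ` H"
    proof
      fix ws assume ws: "ws \<in> Arr blk K"
      then obtain w ws' where c: "ws = w # ws'" using assms(4) by (cases ws) (auto simp: Nil_Arr)
      then obtain t where "t \<in> K" "w \<in> Or (blk t)" "ws' \<in> Arr blk (K - {t})" using ws Cons_Arr by blast
      then show "ws \<in> g ` H" unfolding H_def g_def using c by (auto intro!: image_eqI[of _ _ "(t, w, ws')"])
    qed
  next
    show "g ` H \<subseteq> Arr blk K" unfolding H_def g_def using Cons_Arr by fastforce
  qed
  have inj: "inj_on g H"
  proof (rule inj_onI)
    fix p q assume p: "p \<in> H" and q: "q \<in> H" and e: "g p = g q"
    obtain t w ws where pp: "p = (t, w, ws)" by (cases p) auto
    obtain t' w' ws' where qq: "q = (t', w', ws')" by (cases q) auto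
    have h: "t \<in> K" "w \<in> Or (blk t)" "t' \<in> K" "w' \<in> Or (blk t')" using p q pp qq by (auto simp: H_def)
    have ww: "w = w'" "ws = ws'" using e pp qq by (auto simp: g_def)
    have tU: "t \<in> U" "t' \<in> U" using h(1,3) assms(3) by auto
    have "w \<noteq> []" using wfb_Or(1)[OF assms(1) tU(1) h(2)] .
    then have "hd w \<in> set (blk t)" "hd w \<in> set (blk t')" using h ww Or_props(1) by (metis hd_in_set)+
    then have "t = t'" using wfb_same[OF assms(1) tU] by metis
    then show "p = q" using pp qq ww by simp
  qed
  have "(\<Sum>ws\<in>Arr blk K. F ws) = (\<Sum>p\<in>H. F (g p))"
    unfolding img by (rule sum.reindex[OF inj, unfolded comp_def])
  also have "\<dots> = (\<Sum>(t, p)\<in>H. F (fst p # snd p))"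
    by (rule sum.cong) (auto simp: g_def)
  also have "\<dots> = (\<Sum>t\<in>K. \<Sum>p\<in>Or (blk t) \<times> Arr blk (K - {t}). F (fst p # snd p))"
    unfolding H_def
    by (rule sum.Sigma[symmetric]) (auto simp: assms(2) Or_finite Arr_finite)
  also have "\<dots> = (\<Sum>t\<in>K. \<Sum>w\<in>Or (blk t). \<Sum>ws\<in>Arr blk (K - {t}). F (w # ws))"
    by (simp add: sum.cartesian_product split_beta)
  finally show ?thesis .
qed


fun chain :: "('a \<Rightarrow> 'a \<Rightarrow> real) \<Rightarrow> 'a \<Rightarrow> 'a list list \<Rightarrow> 'a \<Rightarrow> real" where
  "chain d x [] y = d x y"
| "chain d x (w # ws) y = d x (hd w) + pth d w + chain d (last w) ws y"

definition muavg :: "'a list \<Rightarrow> ('a \<Rightarrow> real) \<Rightarrow> real" where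
  "muavg B f = (\<Sum>i\<in>set B. mu_block B i * f i)"

lemma hd_neq_last: "distinct B \<Longrightarrow> length B \<ge> 2 \<Longrightarrow> hd B \<noteq> last B"
proof -
  assume d: "distinct B" and l: "length B \<ge> 2"
  have i: "0 < length B" "length B - 1 < length B" using l by auto
  have "B ! 0 = B ! (length B - 1) \<longleftrightarrow> 0 = length B - 1"
    using nth_eq_iff_index_eq[OF d i] .
  moreover have "B \<noteq> []" using l by auto
  ultimately show ?thesis using l by (simp add: hd_conv_nth last_conv_nth)
qed

lemma mu_sum_gen:
  assumes "B \<noteq> []" "distinct B"
  shows "(\<Sum>w\<in>Or B. f (hd w)) = real (card (Or B)) * muavg B f
       \<and> (\<Sum>w\<in>Or B. f (last w)) = real (card (Or B)) * muavg B f"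
proof (cases "length B = 1")
  case True
  then obtain x where x: "B = [x]" by (cases B) (auto simp: length_Suc_conv)
  then show ?thesis by (simp add: Or_def muavg_def mu_block_def)
next
  case False
  then have l: "length B \<ge> 2" using assms(1) length_greater_0_conv[of B] by linarith
  have hl: "hd B \<noteq> last B" using hd_neq_last[OF assms(2) l] .
  have ne: "B \<noteq> rev B" using hl assms(1) by (metis hd_rev)
  have Or2: "Or B = {B, rev B}" by (simp add: Or_def)
  have c: "card (Or B) = 2" using ne by (simp add: Or2)
  have m: "muavg B f = (\<Sum>i\<in>set B. if i \<in> {hd B, last B} then 1/2 * f i else 0)"
    unfolding muavg_def mu_block_def using False by (intro sum.cong) auto
  also have "\<dots> = (\<Sum>i\<in>set B \<inter> {hd B, last B}. 1/2 * f i)"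
    using sum.inter_restrict[of "set B" "\<lambda>i. 1/2 * f i" "{hd B, last B}"] by simp
  also have "set B \<inter> {hd B, last B} = {hd B, last B}" using assms(1) by auto
  also have "(\<Sum>i\<in>{hd B, last B}. 1/2 * f i) = 1/2 * f (hd B) + 1/2 * f (last B)"
    using hl by simp
  finally have mm: "muavg B f = 1/2 * f (hd B) + 1/2 * f (last B)" .
  have s1: "(\<Sum>w\<in>Or B. f (hd w)) = f (hd B) + f (last B)"
    using ne assms(1) by (simp add: Or2 hd_rev)
  have s2: "(\<Sum>w\<in>Or B. f (last w)) = f (last B) + f (hd B)"
    using ne assms(1) by (simp add: Or2 last_rev)
  show ?thesis using s1 s2 mm c by simp
qed

lemma mu_sum_one: "B \<noteq> [] \<Longrightarrow> distinct B \<Longrightarrow> muavg B (\<lambda>_. 1) = 1"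
proof -
  assume a: "B \<noteq> []" "distinct B"
  have "real (card (Or B)) * muavg B (\<lambda>_. 1) = (\<Sum>w\<in>Or B. 1)"
    using mu_sum_gen[OF a, of "\<lambda>_. 1"] by simp
  also have "\<dots> = real (card (Or B))" by simp
  finally show ?thesis using Or_self[of B] Or_finite[of B]
    by (metis card_0_eq empty_iff mult_cancel_left1 of_nat_eq_0_iff)
qed

lemma muavg_lin: "muavg B (\<lambda>z. a + c * f z) = a * muavg B (\<lambda>_. 1) + c * muavg B f"
  by (simp add: muavg_def sum.distrib sum_distrib_left algebra_simps)

lemma muavg_sum: "muavg B (\<lambda>z. \<Sum>u\<in>S. f u z) = (\<Sum>u\<in>S. muavg B (f u))"
  by (simp add: muavg_def sum_distrib_left sum.swap[of _ "set B"])

lemma chain_tour: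
  assumes "c \<noteq> []" "\<forall>w\<in>set ws. w \<noteq> []"
  shows "pth d (c @ concat ws) + d (last (c @ concat ws)) y = pth d c + chain d (last c) ws y"
  using assms
proof (induction ws arbitrary: c)
  case Nil then show ?case by simp
next
  case (Cons w ws)
  have wne: "w \<noteq> []" using Cons.prems by simp
  have "c @ concat (w # ws) = (c @ w) @ concat ws" by simp
  then have "pth d (c @ concat (w # ws)) + d (last (c @ concat (w # ws))) y
      = pth d (c @ w) + chain d (last (c @ w)) ws y"
    using Cons.IH[of "c @ w"] Cons.prems by simp
  also have "\<dots> = pth d c + chain d (last c) (w # ws) y"
    using wne Cons.prems(1) by (simp add: pth_append)
  finally show ?case .
qed

lemma sum_minus_one:
  assumes "finite K"
  shows "(\<Sum>t\<in>K. \<Sum>u\<in>K - {t}. f u) = (real (card K) - 1) * (\<Sum>u\<in>K. f u :: real)"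
proof -
  have "(\<Sum>t\<in>K. \<Sum>u\<in>K - {t}. f u) = (\<Sum>t\<in>K. (\<Sum>u\<in>K. f u) - f t)"
    using assms by (intro sum.cong refl) (simp add: sum_diff1)
  also have "\<dots> = real (card K) * (\<Sum>u\<in>K. f u) - (\<Sum>u\<in>K. f u)"
    by (simp add: sum_subtractf)
  finally show ?thesis by (simp add: algebra_simps)
qed

lemma N_closed:
  assumes "wfb blk U" "finite K" "K \<subseteq> U"
  shows "real (card (Arr blk K)) = fact (card K) * (\<Prod>t\<in>K. real (card (Or (blk t))))"
  using assms(2,3)
proof (induction K rule: finite_remove_induct)
  case empty then show ?case by (simp add: Arr_empty)
next
  case (remove A)
  have AU: "A \<subseteq> U" using remove.prems by simp
  have fA: "finite A" using remove.hyps(1) .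
  define P where "P = (\<Prod>t\<in>A. real (card (Or (blk t))))"
  have "real (card (Arr blk A)) = (\<Sum>ws\<in>Arr blk A. 1)" by simp
  also have "\<dots> = (\<Sum>t\<in>A. \<Sum>w\<in>Or (blk t). \<Sum>ws\<in>Arr blk (A - {t}). 1)"
    by (rule Arr_sum[OF assms(1) fA AU remove.hyps(2)])
  also have "\<dots> = (\<Sum>t\<in>A. real (card (Or (blk t))) * real (card (Arr blk (A - {t}))))"
    by simp
  also have "\<dots> = (\<Sum>t\<in>A. fact (card A - 1) * P)"
  proof (intro sum.cong refl)
    fix t assume t: "t \<in> A"
    have "real (card (Arr blk (A - {t}))) = fact (card (A - {t})) * (\<Prod>u\<in>A - {t}. real (card (Or (blk u))))"
      using remove.IH[OF t] AU by auto
    moreover have "real (card (Or (blk t))) * (\<Prod>u\<in>A - {t}. real (card (Or (blk u)))) = P"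
      unfolding P_def using fA t by (simp add: prod.remove)
    ultimately show "real (card (Or (blk t))) * real (card (Arr blk (A - {t}))) = fact (card A - 1) * P"
      using fA t by (simp add: card_Diff_singleton algebra_simps)
  qed
  also have "\<dots> = real (card A) * fact (card A - 1) * P" by simp
  also have "\<dots> = fact (card A) * P"
  proof -
    have "card A > 0" using fA remove.hyps(2) by (simp add: card_gt_0_iff)
    then show ?thesis by (metis fact_num_eq_if of_nat_fact gr0_conv_Suc diff_Suc_1 fact_Suc mult.assoc
        of_nat_mult)
  qed
  finally show ?case by (simp add: P_def)
qed


lemma PP_remove:
  assumes "finite A" "\<And>u v. f u v = f v u"
  shows "(\<Sum>t\<in>A. \<Sum>u\<in>A - {t}. \<Sum>v\<in>A - {t} - {u}. f u v)
       = (real (card A) - 2) * (\<Sum>u\<in>A. \<Sum>v\<in>A - {u}. f u v :: real)"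
proof -
  define R where "R u = (\<Sum>v\<in>A - {u}. f u v)" for u
  have "(\<Sum>t\<in>A. \<Sum>u\<in>A - {t}. \<Sum>v\<in>A - {t} - {u}. f u v)
      = (\<Sum>t\<in>A. \<Sum>u\<in>A - {t}. R u - f t u)"
  proof (intro sum.cong refl)
    fix t u assume t: "t \<in> A" and u: "u \<in> A - {t}"
    have "A - {t} - {u} = (A - {u}) - {t}" by auto
    moreover have "t \<in> A - {u}" using t u by auto
    ultimately have "(\<Sum>v\<in>A - {t} - {u}. f u v) = R u - f u t"
      using assms(1) by (simp add: R_def sum_diff1)
    then show "(\<Sum>v\<in>A - {t} - {u}. f u v) = R u - f t u" using assms(2) by simp
  qed
  also have "\<dots> = (\<Sum>t\<in>A. \<Sum>u\<in>A - {t}. R u) - (\<Sum>t\<in>A. \<Sum>u\<in>A - {t}. f t u)"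
    by (simp add: sum_subtractf)
  also have "(\<Sum>t\<in>A. \<Sum>u\<in>A - {t}. R u) = (real (card A) - 1) * (\<Sum>u\<in>A. R u)"
    using sum_minus_one[OF assms(1)] .
  finally show ?thesis by (simp add: R_def algebra_simps)
qed

definition Dt :: "('a \<Rightarrow> 'a \<Rightarrow> real) \<Rightarrow> (nat \<Rightarrow> 'a list) \<Rightarrow> nat \<Rightarrow> 'a \<Rightarrow> real" where
  "Dt d blk t x = muavg (blk t) (\<lambda>i. d x i)"

definition Dp :: "('a \<Rightarrow> 'a \<Rightarrow> real) \<Rightarrow> (nat \<Rightarrow> 'a list) \<Rightarrow> nat \<Rightarrow> nat \<Rightarrow> real" where
  "Dp d blk t u = muavg (blk t) (\<lambda>i. muavg (blk u) (\<lambda>j. d i j))"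

definition II :: "('a \<Rightarrow> 'a \<Rightarrow> real) \<Rightarrow> (nat \<Rightarrow> 'a list) \<Rightarrow> nat set \<Rightarrow> real" where
  "II d blk K = (\<Sum>t\<in>K. pth d (blk t))"

definition PP :: "('a \<Rightarrow> 'a \<Rightarrow> real) \<Rightarrow> (nat \<Rightarrow> 'a list) \<Rightarrow> nat set \<Rightarrow> real" where
  "PP d blk K = (\<Sum>t\<in>K. \<Sum>u\<in>K - {t}. Dp d blk t u)"

definition EE :: "('a \<Rightarrow> 'a \<Rightarrow> real) \<Rightarrow> (nat \<Rightarrow> 'a list) \<Rightarrow> nat set \<Rightarrow> 'a \<Rightarrow> 'a \<Rightarrow> real" where
  "EE d blk K x y = (if K = {} then d x y
     else (\<Sum>t\<in>K. Dt d blk t x + Dt d blk t y) / real (card K) + PP d blk K / real (card K))"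

lemma Dp_sym: "symf d \<Longrightarrow> Dp d blk t u = Dp d blk u t"
  unfolding Dp_def muavg_def symf_def
  by (simp add: sum_distrib_left sum.swap[of _ "set (blk t)"] algebra_simps)

lemma muavg_add_const: "muavg B (\<lambda>z. f z + c) = muavg B f + c * muavg B (\<lambda>_. 1)"
proof -
  have "muavg B (\<lambda>z. f z + c) = (\<Sum>i\<in>set B. mu_block B i * f i + c * mu_block B i)"
    unfolding muavg_def by (intro sum.cong refl) (simp add: algebra_simps)
  also have "\<dots> = muavg B f + c * muavg B (\<lambda>_. 1)"
    unfolding muavg_def by (simp add: sum.distrib sum_distrib_left)
  finally show ?thesis .
qed

lemma muavg_EE:
  assumes "B \<noteq> []" "distinct B" "K \<noteq> {}"
  shows "muavg B (\<lambda>z. EE d blk K z y)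
     = (\<Sum>u\<in>K. muavg B (\<lambda>z. Dt d blk u z) + Dt d blk u y) / real (card K) + PP d blk K / real (card K)"
proof -
  have "muavg B (\<lambda>z. EE d blk K z y)
      = muavg B (\<lambda>z. (\<Sum>u\<in>K. Dt d blk u z + Dt d blk u y) / real (card K) + PP d blk K / real (card K))"
    using assms(3) by (simp add: EE_def)
  also have "\<dots> = (\<Sum>u\<in>K. muavg B (\<lambda>z. Dt d blk u z + Dt d blk u y)) / real (card K)
      + PP d blk K / real (card K) * muavg B (\<lambda>_. 1)"
    by (simp add: muavg_def sum.distrib sum_distrib_left sum_divide_distrib[symmetric]
        sum.swap[of _ "set B"] algebra_simps)
  also have "muavg B (\<lambda>_. 1) = 1" using mu_sum_one[OF assms(1,2)] .
  also have "(\<Sum>u\<in>K. muavg B (\<lambda>z. Dt d blk u z + Dt d blk u y))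
      = (\<Sum>u\<in>K. muavg B (\<lambda>z. Dt d blk u z) + Dt d blk u y)"
  proof (intro sum.cong refl)
    fix u
    have "muavg B (\<lambda>z. Dt d blk u z + Dt d blk u y)
        = muavg B (\<lambda>z. Dt d blk u z) + Dt d blk u y * muavg B (\<lambda>_. 1)"
      by (rule muavg_add_const)
    then show "muavg B (\<lambda>z. Dt d blk u z + Dt d blk u y) = muavg B (\<lambda>z. Dt d blk u z) + Dt d blk u y"
      using mu_sum_one[OF assms(1,2)] by simp
  qed
  finally show ?thesis by simp
qed


lemma KK:
  assumes wf: "wfb blk U" and sy: "symf d" and "finite K" "K \<subseteq> U"
  shows "\<forall>x y. (\<Sum>ws\<in>Arr blk K. chain d x ws y) = real (card (Arr blk K)) * (II d blk K + EE d blk K x y)"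
  using assms(3,4)
proof (induction K rule: finite_remove_induct)
  case empty then show ?case by (simp add: Arr_empty II_def EE_def)
next
  case (remove A)
  have AU: "A \<subseteq> U" using remove.prems by simp
  have fA: "finite A" using remove.hyps(1) .
  have AUt: "A - {t} \<subseteq> U" for t using AU by auto
  define M where "M = real (card A)"
  have Mpos: "M > 0" using fA remove.hyps(2) by (simp add: M_def card_gt_0_iff)
  define N where "N = real (card (Arr blk A))"
  have blkt: "blk t \<noteq> [] \<and> distinct (blk t)" if "t \<in> A" for t
    using wf that AU unfolding wfb_def by auto
  have cN: "real (card (Or (blk t))) * real (card (Arr blk (A - {t}))) = N / M" if t: "t \<in> A" for t
  proof -
    have "N = fact (card A) * (\<Prod>t\<in>A. real (card (Or (blk t))))"
      using N_closed[OF wf fA AU] by (simp add: N_def)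
    moreover have "real (card (Arr blk (A - {t}))) = fact (card A - 1) * (\<Prod>u\<in>A - {t}. real (card (Or (blk u))))"
    proof -
      have sub: "A - {t} \<subseteq> U" using AU by auto
      show ?thesis using N_closed[OF wf _ sub] fA t by (simp add: card_Diff_singleton)
    qed
    moreover have "(\<Prod>t\<in>A. real (card (Or (blk t)))) = real (card (Or (blk t))) * (\<Prod>u\<in>A - {t}. real (card (Or (blk u))))"
      using fA t by (simp add: prod.remove)
    moreover have "fact (card A) = M * fact (card A - 1)"
    proof -
      have "card A > 0" using Mpos by (simp add: M_def)
      then show ?thesis unfolding M_def by (metis fact_num_eq_if of_nat_fact gr0_conv_Suc diff_Suc_1 fact_Suc of_nat_mult neq0_conv)
    qed
    ultimately show ?thesis using Mpos by (simp add: field_simps)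
  qed
  show ?case
  proof (intro allI)
    fix x y
    define G where "G t = Dt d blk t x + pth d (blk t) + II d blk (A - {t}) + muavg (blk t) (\<lambda>z. EE d blk (A - {t}) z y)" for t
    have claim1: "(\<Sum>w\<in>Or (blk t). \<Sum>ws\<in>Arr blk (A - {t}). chain d x (w # ws) y) = N / M * G t"
      if t: "t \<in> A" for t
    proof -
      define Nt where "Nt = real (card (Arr blk (A - {t})))"
      define ct where "ct = real (card (Or (blk t)))"
      have IH: "(\<Sum>ws\<in>Arr blk (A - {t}). chain d z ws y) = real (card (Arr blk (A - {t}))) * (II d blk (A - {t}) + EE d blk (A - {t}) z y)" for z
        using remove.IH[OF t AUt] by simp
      have "(\<Sum>w\<in>Or (blk t). \<Sum>ws\<in>Arr blk (A - {t}). chain d x (w # ws) y)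
          = (\<Sum>w\<in>Or (blk t). Nt * (d x (hd w) + pth d w) + Nt * (II d blk (A - {t}) + EE d blk (A - {t}) (last w) y))"
        by (intro sum.cong refl) (simp add: sum.distrib IH Nt_def)
      also have "\<dots> = Nt * ((\<Sum>w\<in>Or (blk t). d x (hd w)) + (\<Sum>w\<in>Or (blk t). pth d w)
           + ct * II d blk (A - {t}) + (\<Sum>w\<in>Or (blk t). EE d blk (A - {t}) (last w) y))"
        by (simp add: sum.distrib sum_distrib_left ct_def algebra_simps)
      also have "(\<Sum>w\<in>Or (blk t). d x (hd w)) = ct * Dt d blk t x"
        using mu_sum_gen[of "blk t" "\<lambda>i. d x i"] blkt[OF t] by (simp add: ct_def Dt_def)
      also have "(\<Sum>w\<in>Or (blk t). EE d blk (A - {t}) (last w) y) = ct * muavg (blk t) (\<lambda>z. EE d blk (A - {t}) z y)"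
        using mu_sum_gen[of "blk t" "\<lambda>z. EE d blk (A - {t}) z y"] blkt[OF t] by (simp add: ct_def)
      also have "(\<Sum>w\<in>Or (blk t). pth d w) = ct * pth d (blk t)"
      proof -
        have "(\<Sum>w\<in>Or (blk t). pth d w) = (\<Sum>w\<in>Or (blk t). pth d (blk t))"
          using Or_props(6)[OF _ sy] by (intro sum.cong refl) blast
        then show ?thesis by (simp add: ct_def)
      qed
      finally have "(\<Sum>w\<in>Or (blk t). \<Sum>ws\<in>Arr blk (A - {t}). chain d x (w # ws) y) = ct * Nt * G t"
        by (simp add: G_def algebra_simps)
      then show ?thesis using cN[OF t] by (simp add: ct_def Nt_def)
    qed
    have claim2: "(\<Sum>t\<in>A. G t) = M * (II d blk A + EE d blk A x y)"
    proof (cases "card A = 1")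
      case True
      then obtain t where At: "A = {t}" by (auto simp: card_Suc_eq)
      have "muavg (blk t) (\<lambda>z. d z y) = Dt d blk t y"
        unfolding Dt_def using sy unfolding symf_def by metis
      then show ?thesis using At by (simp add: G_def EE_def II_def PP_def M_def)
    next
      case False
      then have M2: "card A \<ge> 2" using Mpos by (simp add: M_def)
      have M1: "M - 1 > 0" using M2 by (simp add: M_def)
      have cardm: "real (card (A - {t})) = M - 1" if "t \<in> A" for t
        using that fA M2 by (simp add: M_def card_Diff_singleton of_nat_diff)
      have ne: "A - {t} \<noteq> {}" if "t \<in> A" for t
        using that M2 fA by (metis One_nat_def card.empty card_Diff_singleton diff_is_0_eq
            not_one_le_zero numeral_le_one_iff semiring_norm(69) le_zero_eq Suc_1 diff_Suc_1 card_0_eq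
            finite_Diff less_one not_less_eq_eq)
      have G2: "G t = Dt d blk t x + pth d (blk t) + II d blk (A - {t})
          + (\<Sum>u\<in>A - {t}. Dp d blk t u + Dt d blk u y) / (M - 1) + PP d blk (A - {t}) / (M - 1)"
        if t: "t \<in> A" for t
        using muavg_EE[of "blk t" "A - {t}" d blk y] blkt[OF t] ne[OF t] cardm[OF t]
        by (simp add: G_def Dp_def Dt_def)
      have e1: "(\<Sum>t\<in>A. G t) = (\<Sum>t\<in>A. Dt d blk t x) + II d blk A + (\<Sum>t\<in>A. II d blk (A - {t}))
          + ((\<Sum>t\<in>A. \<Sum>u\<in>A - {t}. Dp d blk t u) + (\<Sum>t\<in>A. \<Sum>u\<in>A - {t}. Dt d blk u y)) / (M - 1)
          + (\<Sum>t\<in>A. PP d blk (A - {t})) / (M - 1)"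
        by (simp add: G2 sum.distrib sum_divide_distrib[symmetric] II_def)
      have S1: "(\<Sum>t\<in>A. II d blk (A - {t})) = (M - 1) * II d blk A"
        unfolding II_def M_def using sum_minus_one[OF fA] .
      have S3: "(\<Sum>t\<in>A. \<Sum>u\<in>A - {t}. Dt d blk u y) = (M - 1) * (\<Sum>u\<in>A. Dt d blk u y)"
        unfolding M_def using sum_minus_one[OF fA] .
      have S2: "(\<Sum>t\<in>A. \<Sum>u\<in>A - {t}. Dp d blk t u) = PP d blk A" by (simp add: PP_def)
      have S4: "(\<Sum>t\<in>A. PP d blk (A - {t})) = (M - 2) * PP d blk A"
      proof -
        have "(\<Sum>t\<in>A. PP d blk (A - {t})) = (\<Sum>t\<in>A. \<Sum>u\<in>A - {t}. \<Sum>v\<in>A - {t} - {u}. Dp d blk u v)"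
          by (simp add: PP_def)
        also have "\<dots> = (M - 2) * PP d blk A"
          using PP_remove[OF fA, of "Dp d blk"] Dp_sym[OF sy] by (simp add: PP_def M_def)
        finally show ?thesis .
      qed
      have aux: "(p + (m - 1) * yy) / (m - 1) + (m - 2) * p / (m - 1) = p + yy" if "(m::real) - 1 > 0" for p yy m
      proof -
        have "(p + (m - 1) * yy) / (m - 1) + (m - 2) * p / (m - 1) = (p + (m - 1) * yy + (m - 2) * p) / (m - 1)"
          by (simp add: add_divide_distrib)
        also have "p + (m - 1) * yy + (m - 2) * p = (m - 1) * (p + yy)" by (simp add: algebra_simps)
        finally show ?thesis using that by simp
      qed
      have "(\<Sum>t\<in>A. G t) = (\<Sum>t\<in>A. Dt d blk t x) + M * II d blk A
          + ((PP d blk A + (M - 1) * (\<Sum>u\<in>A. Dt d blk u y)) / (M - 1) + (M - 2) * PP d blk A / (M - 1))"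
        unfolding e1 S1 S2 S3 S4 by (simp add: algebra_simps)
      also have "\<dots> = (\<Sum>t\<in>A. Dt d blk t x) + M * II d blk A + (PP d blk A + (\<Sum>u\<in>A. Dt d blk u y))"
        using aux[OF M1] by simp
      also have "\<dots> = M * (II d blk A + EE d blk A x y)"
        using remove.hyps(2) Mpos by (simp add: EE_def M_def[symmetric] sum.distrib field_simps)
      finally show ?thesis .
    qed
    have "(\<Sum>ws\<in>Arr blk A. chain d x ws y) = (\<Sum>t\<in>A. \<Sum>w\<in>Or (blk t). \<Sum>ws\<in>Arr blk (A - {t}). chain d x (w # ws) y)"
      by (rule Arr_sum[OF wf fA AU remove.hyps(2)])
    also have "\<dots> = (\<Sum>t\<in>A. N / M * G t)" using claim1 by simp
    also have "\<dots> = N / M * (M * (II d blk A + EE d blk A x y))"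
      unfolding sum_distrib_left[symmetric] claim2 ..
    also have "\<dots> = N * (II d blk A + EE d blk A x y)" using Mpos by simp
    finally show "(\<Sum>ws\<in>Arr blk A. chain d x ws y) = real (card (Arr blk A)) * (II d blk A + EE d blk A x y)"
      by (simp add: N_def)
  qed
qed


lemma concat_disj:
  "distinct (concat Cs) \<Longrightarrow> t < length Cs \<Longrightarrow> u < length Cs \<Longrightarrow> t \<noteq> u
   \<Longrightarrow> set (Cs ! t) \<inter> set (Cs ! u) = {}"
proof (induction Cs arbitrary: t u)
  case Nil then show ?case by simp
next
  case (Cons B Cs)
  have d: "distinct (concat Cs)" "set B \<inter> set (concat Cs) = {}" using Cons.prems(1) by auto
  show ?case
  proof (cases t)
    case 0
    then obtain u' where u: "u = Suc u'" using Cons.prems(4) by (cases u) auto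
    have "Cs ! u' \<in> set Cs" using Cons.prems(3) u by simp
    then have "set (Cs ! u') \<subseteq> set (concat Cs)" by auto
    then show ?thesis using d(2) 0 u by auto
  next
    case (Suc t')
    show ?thesis
    proof (cases u)
      case 0
      have "Cs ! t' \<in> set Cs" using Cons.prems(2) \<open>t = Suc t'\<close> by simp
      then have "set (Cs ! t') \<subseteq> set (concat Cs)" by auto
      then show ?thesis using d(2) 0 Suc by auto
    next
      case (Suc u')
      then show ?thesis using Cons.IH[OF d(1), of t' u'] Cons.prems \<open>t = Suc t'\<close> by simp
    qed
  qed
qed

lemma pc_wfb:
  assumes "partial_circ X Cs"
  shows "wfb (nth Cs) {0..<length Cs}"
proof -
  have "distinct (concat Cs)" using assms by (simp add: partial_circ_def)
  then have "\<forall>t\<in>{0..<length Cs}. Cs ! t \<noteq> [] \<and> distinct (Cs ! t)"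
    using assms unfolding partial_circ_def by (auto simp: distinct_concat_iff)
  moreover have "\<forall>t\<in>{0..<length Cs}. \<forall>u\<in>{0..<length Cs}. t \<noteq> u \<longrightarrow> set (Cs ! t) \<inter> set (Cs ! u) = {}"
  proof (intro ballI impI)
    fix t u assume "t \<in> {0..<length Cs}" "u \<in> {0..<length Cs}" "t \<noteq> u"
    then show "set (Cs ! t) \<inter> set (Cs ! u) = {}"
      using concat_disj[OF \<open>distinct (concat Cs)\<close>] by auto
  qed
  ultimately show ?thesis unfolding wfb_def by blast
qed

lemma pc_set: "partial_circ X Cs \<Longrightarrow> (\<Union>t\<in>{0..<length Cs}. set (Cs ! t)) = X"
proof -
  assume a: "partial_circ X Cs"
  have "set Cs = (!) Cs ` {0..<length Cs}" by (metis map_nth set_map set_upt)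
  then have "set (concat Cs) = (\<Union>t\<in>{0..<length Cs}. set (Cs ! t))" by (simp add: image_image)
  then show ?thesis using a by (simp add: partial_circ_def)
qed

lemma ledges_mono: "ledges a \<subseteq> ledges (a @ b)" "ledges b \<subseteq> ledges (a @ b)"
proof -
  show "ledges a \<subseteq> ledges (a @ b)"
    by (cases "a = []"; cases "b = []") (auto simp: ledges_append)
  show "ledges b \<subseteq> ledges (a @ b)"
    by (cases "a = []"; cases "b = []") (auto simp: ledges_append)
qed

lemma ledges_concat: "w \<in> set ws \<Longrightarrow> ledges w \<subseteq> ledges (concat ws)"
proof (induction ws)
  case Nil then show ?case by simp
next
  case (Cons w' ws)
  show ?case
  proof (cases "w = w'")
    case True then show ?thesis using ledges_mono(1)[of w' "concat ws"] by simp
  next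
    case False then show ?thesis using Cons ledges_mono(2)[of "concat ws" w'] by auto
  qed
qed

lemma Arr_cover: "ws \<in> Arr blk K \<Longrightarrow> t \<in> K \<Longrightarrow> \<exists>w\<in>set ws. w \<in> Or (blk t)"
proof (induction ws arbitrary: K)
  case Nil then show ?case by (simp add: Nil_Arr)
next
  case (Cons w ws)
  then obtain t' where t': "t' \<in> K" "w \<in> Or (blk t')" "ws \<in> Arr blk (K - {t'})" by (auto simp: Cons_Arr)
  show ?case
  proof (cases "t = t'")
    case True then show ?thesis using t' by auto
  next
    case False then show ?thesis using Cons.IH[OF t'(3)] Cons.prems(2) by auto
  qed
qed

lemma consec_cedges:
  assumes "ys \<noteq> []" "\<forall>i j. consec B i j \<longrightarrow> cyc_adj ys i j"
  shows "ledges B \<subseteq> cedges ys"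
proof
  fix e assume "e \<in> ledges B"
  then obtain k where k: "e = {B ! k, B ! (k + 1)}" "k + 1 < length B" by (auto simp: ledges_nth)
  then have "consec B (B ! k) (B ! (k + 1))" by (auto simp: consec_def)
  then have "cyc_adj ys (B ! k) (B ! (k + 1))" using assms(2) by blast
  then show "e \<in> cedges ys" using cyc_adj_cedges[OF assms(1)] k(1) by simp
qed

lemma pth_cong: "(\<forall>i\<in>set B. \<forall>j\<in>set B. d i j = d' i j) \<Longrightarrow> pth d B = pth d' B"
  by (induction d B rule: pth.induct) auto

lemma mu_eq:
  assumes "partial_circ X Cs" "t < length Cs" "i \<in> set (Cs ! t)"
  shows "mu Cs i = mu_block (Cs ! t) i"
proof -
  have dis: "distinct (concat Cs)" using assms(1) by (simp add: partial_circ_def)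
  have "mu Cs i = (\<Sum>k\<in>{0..<length Cs}. mu_block (Cs ! k) i)"
    unfolding mu_def by (simp add: sum_list_sum_nth)
  also have "\<dots> = mu_block (Cs ! t) i + (\<Sum>k\<in>{0..<length Cs} - {t}. mu_block (Cs ! k) i)"
    using assms(2) by (simp add: sum.remove)
  also have "(\<Sum>k\<in>{0..<length Cs} - {t}. mu_block (Cs ! k) i) = 0"
  proof (intro sum.neutral ballI)
    fix k assume k: "k \<in> {0..<length Cs} - {t}"
    then have "set (Cs ! t) \<inter> set (Cs ! k) = {}" using concat_disj[OF dis assms(2)] by auto
    then have "i \<notin> set (Cs ! k)" using assms(3) by auto
    then show "mu_block (Cs ! k) i = 0" by (simp add: mu_block_def)
  qed
  finally show ?thesis by simp
qed

lemma sum_tri: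
  fixes m :: nat
  assumes "\<And>t u. f t u = f u t"
  shows "(\<Sum>u<m. \<Sum>t<u. f t u) = (1/2) * (\<Sum>t\<in>{..<m}. \<Sum>u\<in>{..<m} - {t}. f t u :: real)"
proof (induction m)
  case 0 then show ?case by simp
next
  case (Suc m)
  have A: "(\<Sum>t\<in>{..<Suc m}. \<Sum>u\<in>{..<Suc m} - {t}. f t u)
      = (\<Sum>t\<in>{..<m}. \<Sum>u\<in>{..<Suc m} - {t}. f t u) + (\<Sum>u\<in>{..<m}. f m u)"
    by (simp add: lessThan_Suc)
  have B: "(\<Sum>u\<in>{..<Suc m} - {t}. f t u) = (\<Sum>u\<in>{..<m} - {t}. f t u) + f t m" if "t < m" for t
  proof -
    have "{..<Suc m} - {t} = insert m ({..<m} - {t})" using that by auto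
    then show ?thesis by simp
  qed
  have "(\<Sum>t\<in>{..<Suc m}. \<Sum>u\<in>{..<Suc m} - {t}. f t u)
      = (\<Sum>t\<in>{..<m}. \<Sum>u\<in>{..<m} - {t}. f t u) + (\<Sum>t<m. f t m) + (\<Sum>u\<in>{..<m}. f m u)"
    unfolding A by (simp add: B sum.distrib)
  also have "(\<Sum>u\<in>{..<m}. f m u) = (\<Sum>t<m. f t m)" using assms by simp
  finally show ?case using Suc.IH by simp
qed


definition fl :: "'a list \<times> 'a list \<times> 'a list list \<Rightarrow> 'a list" where
  "fl p = fst p @ fst (snd p) @ concat (snd (snd p))"

definition SS :: "'a list list \<Rightarrow> nat \<Rightarrow> nat \<Rightarrow> ('a list \<times> 'a list \<times> 'a list list) set" where
  "SS Cs r s = Or (Cs ! r) \<times> Or (Cs ! s) \<times> Arr (nth Cs) ({0..<length Cs} - {r} - {s})"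

lemma SS_Arr:
  assumes "r < length Cs" "s < length Cs" "r \<noteq> s" "(a, b, ws) \<in> SS Cs r s"
  shows "a # b # ws \<in> Arr (nth Cs) {0..<length Cs}"
proof -
  have "b # ws \<in> Arr (nth Cs) ({0..<length Cs} - {r})"
    using assms by (subst Cons_Arr) (auto simp: SS_def)
  then show ?thesis using assms by (subst Cons_Arr) (auto simp: SS_def)
qed

lemma SS_props:
  assumes pc: "partial_circ X Cs" and "r < length Cs" "s < length Cs" "r \<noteq> s" "p \<in> SS Cs r s"
  shows "distinct (fl p)" "set (fl p) = X" "fl p \<noteq> []"
proof -
  obtain a b ws where p: "p = (a, b, ws)" by (cases p) auto
  have A: "a # b # ws \<in> Arr (nth Cs) {0..<length Cs}" using SS_Arr assms p by blast
  have fl: "fl p = concat (a # b # ws)" by (simp add: fl_def p)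
  show "distinct (fl p)" using Arr_distinct[OF pc_wfb[OF pc] _ A] fl by simp
  show "set (fl p) = X" using Arr_set[OF A] pc_set[OF pc] fl by simp
  have "a \<in> Or (Cs ! r)" using assms(5) p by (simp add: SS_def)
  then have "a \<noteq> []" using wfb_Or(1)[OF pc_wfb[OF pc], of r a] assms(2) by simp
  then show "fl p \<noteq> []" by (simp add: fl_def p)
qed

lemma K0_props:
  assumes "length Cs \<ge> 3" "r < length Cs" "s < length Cs" "r \<noteq> s"
  shows "{0..<length Cs} - {r} - {s} \<noteq> {}" "finite ({0..<length Cs} - {r} - {s})"
    "real (card ({0..<length Cs} - {r} - {s})) = real (length Cs) - 2"
proof -
  have c: "card ({0..<length Cs} - {r} - {s}) = length Cs - 2"
    using assms by (simp add: card_Diff_singleton)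
  then show "real (card ({0..<length Cs} - {r} - {s})) = real (length Cs) - 2"
    using assms(1) by (simp add: of_nat_diff)
  have "length Cs - 2 \<noteq> 0" using assms(1) by simp
  then show "{0..<length Cs} - {r} - {s} \<noteq> {}" using c by (metis card.empty)
  show "finite ({0..<length Cs} - {r} - {s})" by simp
qed

lemma o_sup:
  assumes pc: "partial_circ X Cs" and "r < length Cs" "s < length Cs" "r \<noteq> s" "p \<in> SS Cs r s"
  shows "circ_class (fl p) \<in> o_join X Cs r s"
proof -
  obtain a b ws where p: "p = (a, b, ws)" by (cases p) auto
  have ab: "a \<in> Or (Cs ! r)" "b \<in> Or (Cs ! s)" "ws \<in> Arr (nth Cs) ({0..<length Cs} - {r} - {s})"
    using assms(5) p by (auto simp: SS_def)
  have pr: "distinct (fl p)" "set (fl p) = X" "fl p \<noteq> []" using SS_props[OF assms] by auto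
  have co: "circ_class (fl p) \<in> circ_orderings X" unfolding circ_orderings_def using pr by blast
  define P where "P = (a @ b) # [Cs ! t. t \<leftarrow> [0..<length Cs], t \<noteq> r, t \<noteq> s]"
  have PJ: "P \<in> join_set Cs r s"
    unfolding join_set_def P_def using ab(1,2) by (auto simp: Or_def)
  have "\<forall>B\<in>set P. \<forall>i j. consec B i j \<longrightarrow> cyc_adj (fl p) i j"
  proof (intro ballI allI impI)
    fix B i j assume B: "B \<in> set P" and c: "consec B i j"
    have "ledges B \<subseteq> ledges (fl p)"
    proof (cases "B = a @ b")
      case True then show ?thesis using ledges_mono(1)[of "a @ b" "concat ws"] by (simp add: fl_def p)
    next
      case False
      then obtain t where t: "t < length Cs" "t \<noteq> r" "t \<noteq> s" "B = Cs ! t" using B by (auto simp: P_def)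
      then obtain w where w: "w \<in> set ws" "w \<in> Or (Cs ! t)" using Arr_cover[OF ab(3), of t] by auto
      have "ledges B = ledges w" using Or_props(5)[OF w(2)] t(4) by simp
      also have "\<dots> \<subseteq> ledges (concat ws)" using ledges_concat[OF w(1)] .
      also have "\<dots> \<subseteq> ledges (fl p)" using ledges_mono(2)[of "concat ws" "a @ b"] by (simp add: fl_def p)
      finally show ?thesis .
    qed
    then have "{i, j} \<in> cedges (fl p)" using consec_ledges[OF c] by (auto simp: cedges_def)
    then show "cyc_adj (fl p) i j" using cyc_adj_cedges[OF pr(3)] by simp
  qed
  then have "consistent (circ_class (fl p)) P" unfolding consistent_def using class_self by blast
  then show ?thesis unfolding o_join_def using co PJ by blast
qed


lemma len_less:
  assumes "distinct zs" "set Q \<subseteq> set zs" "distinct Q" "x \<in> set zs" "x \<notin> set Q"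
  shows "length Q < length zs"
proof -
  have "set Q \<subset> set zs" using assms by auto
  then have "card (set Q) < card (set zs)" by (simp add: psubset_card_mono)
  then show ?thesis using assms(1,3) by (simp add: distinct_card)
qed

lemma o_sub:
  assumes pc: "partial_circ X Cs" and m3: "length Cs \<ge> 3" and rs: "r < length Cs" "s < length Cs" "r \<noteq> s"
    and c: "c \<in> o_join X Cs r s"
  shows "\<exists>p\<in>SS Cs r s. c = circ_class (fl p)"
proof -
  define U where "U = {0..<length Cs}"
  define K0 where "K0 = U - {r} - {s}"
  have wf: "wfb (nth Cs) U" using pc_wfb[OF pc] by (simp add: U_def)
  have K0p: "K0 \<noteq> {}" "finite K0" "K0 \<subseteq> U" using K0_props[OF m3 rs] by (auto simp: K0_def U_def)
  have rU: "r \<in> U" "s \<in> U" using rs by (auto simp: U_def)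
  have XU: "X = (\<Union>t\<in>U. set (Cs ! t))" using pc_set[OF pc] by (simp add: U_def)
  have blk: "Cs ! t \<noteq> [] \<and> distinct (Cs ! t)" if "t \<in> U" for t using wf that unfolding wfb_def by blast
  have disj: "set (Cs ! t) \<inter> set (Cs ! u) = {}" if "t \<in> U" "u \<in> U" "t \<noteq> u" for t u
    using wf that unfolding wfb_def by blast
  obtain ys where ys: "c = circ_class ys" "distinct ys" "set ys = X"
    using c unfolding o_join_def circ_orderings_def by blast
  obtain P where P: "P \<in> join_set Cs r s" "consistent c P" using c unfolding o_join_def by blast
  obtain B where B: "P = B # [Cs ! t. t \<leftarrow> [0..<length Cs], t \<noteq> r, t \<noteq> s]"
    "B \<in> {Cs!r @ Cs!s, Cs!r @ rev (Cs!s), rev (Cs!r) @ Cs!s, rev (Cs!r) @ rev (Cs!s)}"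
    using P(1) unfolding join_set_def by blast
  obtain a b where ab: "a \<in> Or (Cs ! r)" "b \<in> Or (Cs ! s)" "B = a @ b"
    using B(2) unfolding Or_def by blast
  obtain ys' where ys': "ys' \<in> c" "\<forall>B'\<in>set P. \<forall>i j. consec B' i j \<longrightarrow> cyc_adj ys' i j"
    using P(2) unfolding consistent_def by blast
  have cys': "c = circ_class ys'" using class_eq[of ys' ys] ys'(1) ys(1) by simp
  have ys'p: "distinct ys'" "set ys' = X" using class_props[of ys' ys] ys'(1) ys by auto
  have ys'ne: "ys' \<noteq> []"
  proof -
    have "Cs ! r \<noteq> []" using blk rU by blast
    then have "set (Cs ! r) \<noteq> {}" by simp
    then show ?thesis using ys'p(2) XU rU by auto
  qed
  have setab: "set a = set (Cs ! r)" "set b = set (Cs ! s)"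
    using Or_props(1) ab(1,2) by auto
  have dab: "distinct a" "distinct b" using Or_props(3) ab(1,2) blk rU by blast+
  have abdisj: "set a \<inter> set b = {}" using setab disj rU rs(3) by simp
  have Bp: "B \<noteq> []" "distinct B" "set B = set (Cs ! r) \<union> set (Cs ! s)"
    using ab(3) dab abdisj setab Or_props(4)[OF ab(1)] blk rU by auto
  obtain t0 where t0: "t0 \<in> K0" using K0p(1) by blast
  have t0U: "t0 \<in> U" "t0 \<noteq> r" "t0 \<noteq> s" using t0 by (auto simp: K0_def)
  obtain x0 where x0: "x0 \<in> set (Cs ! t0)" using blk[OF t0U(1)] by (cases "Cs ! t0") auto
  have x0B: "x0 \<notin> set B" using Bp(3) x0 disj[OF t0U(1) rU(1) t0U(2)] disj[OF t0U(1) rU(2) t0U(3)] by auto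
  have x0X: "x0 \<in> X" using XU x0 t0U(1) by auto
  have BX: "set B \<subseteq> X" using Bp(3) XU rU by auto
  have lenB: "length B < length ys'"
    using len_less[OF ys'p(1) _ Bp(2) _ x0B] BX x0X ys'p(2) by simp
  have "B \<in> set P" using B(1) by simp
  then have "ledges B \<subseteq> cedges ys'" using consec_cedges[OF ys'ne] ys'(2) by blast
  then obtain zs rest where zs: "zs \<in> circ_class ys'" "zs = B @ rest"
    using seg[OF ys'p(1) Bp(1,2) _ lenB] BX ys'p(2) by blast
  have zsp: "distinct zs" "set zs = X" "cedges zs = cedges ys'" "length zs = length ys'"
    using class_props[OF zs(1)] ys'p by auto
  have restp: "distinct rest" using zsp(1) zs(2) by simp
  have setrest: "set rest = (\<Union>t\<in>K0. set (Cs ! t))"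
  proof -
    have "set rest = X - set B" using zsp(1,2) zs(2) by auto
    also have "\<dots> = (\<Union>t\<in>U. set (Cs ! t)) - (set (Cs ! r) \<union> set (Cs ! s))" using XU Bp(3) by simp
    also have "\<dots> = (\<Union>t\<in>K0. set (Cs ! t))"
    proof
      show "(\<Union>t\<in>U. set (Cs ! t)) - (set (Cs ! r) \<union> set (Cs ! s)) \<subseteq> (\<Union>t\<in>K0. set (Cs ! t))"
        by (auto simp: K0_def)
      show "(\<Union>t\<in>K0. set (Cs ! t)) \<subseteq> (\<Union>t\<in>U. set (Cs ! t)) - (set (Cs ! r) \<union> set (Cs ! s))"
      proof
        fix x assume "x \<in> (\<Union>t\<in>K0. set (Cs ! t))"
        then obtain t where t: "t \<in> K0" "x \<in> set (Cs ! t)" by blast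
        have tU: "t \<in> U" "t \<noteq> r" "t \<noteq> s" using t(1) by (auto simp: K0_def)
        have "x \<notin> set (Cs ! r)" "x \<notin> set (Cs ! s)"
          using disj[OF tU(1) rU(1) tU(2)] disj[OF tU(1) rU(2) tU(3)] t(2) by auto
        then show "x \<in> (\<Union>t\<in>U. set (Cs ! t)) - (set (Cs ! r) \<union> set (Cs ! s))" using t(2) tU(1) by auto
      qed
    qed
    finally show ?thesis .
  qed
  have subl: "\<forall>t\<in>K0. \<exists>w\<in>Or (Cs ! t). sublist w rest"
  proof
    fix t assume t: "t \<in> K0"
    have tU: "t \<in> U" "t \<noteq> r" "t \<noteq> s" using t by (auto simp: K0_def)
    define Q where "Q = Cs ! t"
    have Qp: "Q \<noteq> []" "distinct Q" using blk[OF tU(1)] by (auto simp: Q_def)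
    have QB: "set Q \<inter> set B = {}"
      using Bp(3) disj[OF tU(1) rU(1) tU(2)] disj[OF tU(1) rU(2) tU(3)] by (auto simp: Q_def)
    have QX: "set Q \<subseteq> X" using XU tU(1) by (auto simp: Q_def)
    have "Q \<in> set P" using B(1) tU by (auto simp: Q_def U_def)
    then have "ledges Q \<subseteq> cedges ys'" using consec_cedges[OF ys'ne] ys'(2) by blast
    then have lQ: "ledges Q \<subseteq> cedges zs" using zsp(3) by simp
    obtain xb where xb: "xb \<in> set B" using Bp(1) by (cases B) auto
    have lenQ: "length Q < length zs"
      using len_less[OF zsp(1) _ Qp(2), of xb] QX zsp(2) xb QB BX by auto
    obtain zs' rest' where zs': "zs' \<in> circ_class zs" "zs' = Q @ rest'"
      using seg[OF zsp(1) Qp _ lenQ lQ] QX zsp(2) by blast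
    have pre: "prefix Q zs'" using zs'(2) by simp
    obtain k where k: "zs' = rotate k zs \<or> zs' = rotate k (rev zs)"
      using zs'(1) unfolding circ_class_def by blast
    then show "\<exists>w\<in>Or (Cs ! t). sublist w rest"
    proof
      assume "zs' = rotate k zs"
      then have "prefix Q (rotate k (B @ rest))" using pre zs(2) by simp
      then have "sublist Q rest" using prefix_rotate_sublist[OF _ Qp(1) Bp(1) QB] by blast
      then show ?thesis using Or_self[of Q] by (auto simp: Q_def)
    next
      assume z: "zs' = rotate k (rev zs)"
      have "rev zs = rotate (length B) (rev B @ rev rest)"
        using zs(2) rotate_append[of "rev B" "rev rest"] by simp
      then have "zs' = rotate (k + length B) (rev B @ rev rest)" using z by (simp add: rotate_rotate)
      then have "prefix Q (rotate (k + length B) (rev B @ rev rest))" using pre by simp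
      then have "sublist Q (rev rest)" using prefix_rotate_sublist[OF _ Qp(1), of _ "rev B"] Bp(1) QB by auto
      then have "sublist (rev Q) rest" by (simp add: sublist_rev_right)
      moreover have "rev Q \<in> Or (Cs ! t)" by (simp add: Or_def Q_def)
      ultimately show ?thesis by blast
    qed
  qed
  have "rest \<in> concat ` Arr (nth Cs) K0"
    using arr_of_sublists[OF wf K0p(2,3)] restp setrest subl by blast
  then obtain ws where ws: "ws \<in> Arr (nth Cs) K0" "rest = concat ws" by blast
  have "(a, b, ws) \<in> SS Cs r s" using ab ws(1) by (simp add: SS_def K0_def U_def)
  moreover have "fl (a, b, ws) = zs" using zs(2) ab(3) ws(2) by (simp add: fl_def)
  moreover have "c = circ_class zs" using cys' class_eq[OF zs(1)] by simp
  ultimately show ?thesis by blast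
qed

lemma SS_inj:
  assumes pc: "partial_circ X Cs" and m3: "length Cs \<ge> 3" and rs: "r < length Cs" "s < length Cs" "r \<noteq> s"
  shows "inj_on (\<lambda>p. circ_class (fl p)) (SS Cs r s)"
proof (rule inj_onI)
  fix p1 p2 assume p1: "p1 \<in> SS Cs r s" and p2: "p2 \<in> SS Cs r s"
    and e: "circ_class (fl p1) = circ_class (fl p2)"
  define U where "U = {0..<length Cs}"
  define K0 where "K0 = U - {r} - {s}"
  have wf: "wfb (nth Cs) U" using pc_wfb[OF pc] by (simp add: U_def)
  have K0p: "K0 \<noteq> {}" "finite K0" "K0 \<subseteq> U" using K0_props[OF m3 rs] by (auto simp: K0_def U_def)
  have rU: "r \<in> U" "s \<in> U" using rs by (auto simp: U_def)
  have blk: "Cs ! t \<noteq> [] \<and> distinct (Cs ! t)" if "t \<in> U" for t using wf that unfolding wfb_def by blast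
  have disj: "set (Cs ! t) \<inter> set (Cs ! u) = {}" if "t \<in> U" "u \<in> U" "t \<noteq> u" for t u
    using wf that unfolding wfb_def by blast
  obtain a1 b1 ws1 where q1: "p1 = (a1, b1, ws1)" by (cases p1) auto
  obtain a2 b2 ws2 where q2: "p2 = (a2, b2, ws2)" by (cases p2) auto
  have m1: "a1 \<in> Or (Cs ! r)" "b1 \<in> Or (Cs ! s)" "ws1 \<in> Arr (nth Cs) K0"
    using p1 q1 by (auto simp: SS_def K0_def U_def)
  have m2: "a2 \<in> Or (Cs ! r)" "b2 \<in> Or (Cs ! s)" "ws2 \<in> Arr (nth Cs) K0"
    using p2 q2 by (auto simp: SS_def K0_def U_def)
  define A1 where "A1 = a1 @ b1"
  define A2 where "A2 = a2 @ b2"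
  define C1 where "C1 = concat ws1"
  define C2 where "C2 = concat ws2"
  have f1: "fl p1 = A1 @ C1" by (simp add: fl_def q1 A1_def C1_def)
  have f2: "fl p2 = A2 @ C2" by (simp add: fl_def q2 A2_def C2_def)
  have d1: "distinct (A1 @ C1)" using SS_props(1)[OF pc rs p1] f1 by simp
  have a1ne: "a1 \<noteq> []" "b1 \<noteq> []" using wfb_Or(1)[OF wf] m1 rU by blast+
  have a2ne: "a2 \<noteq> []" using wfb_Or(1)[OF wf] m2 rU by blast
  have A1ne: "A1 \<noteq> []" using a1ne by (simp add: A1_def)
  have C1ne: "C1 \<noteq> []"
  proof -
    obtain t where t: "t \<in> K0" using K0p(1) by blast
    then have "Cs ! t \<noteq> []" using blk K0p(3) by blast
    moreover have "set C1 = (\<Union>t\<in>K0. set (Cs ! t))" using Arr_set[OF m1(3)] by (simp add: C1_def)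
    ultimately show ?thesis using t by auto
  qed
  have la: "length a1 = length (Cs ! r)" "length a2 = length (Cs ! r)"
    "length b1 = length (Cs ! s)" "length b2 = length (Cs ! s)"
    using Or_props(2)[OF m1(1)] Or_props(2)[OF m1(2)] Or_props(2)[OF m2(1)] Or_props(2)[OF m2(2)] by auto
  have lenA: "length A2 = length A1" using la by (simp add: A1_def A2_def)
  have setA: "set A2 = set A1"
    using Or_props(1)[OF m1(1)] Or_props(1)[OF m1(2)] Or_props(1)[OF m2(1)] Or_props(1)[OF m2(2)]
    by (simp add: A1_def A2_def)
  have "fl p2 \<in> circ_class (fl p1)" using e class_self by simp
  then obtain k where k: "A2 @ C2 = rotate k (A1 @ C1) \<or> A2 @ C2 = rotate k (rev (A1 @ C1))"
    using f1 f2 unfolding circ_class_def by auto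
  then show "p1 = p2"
  proof
    assume h: "A2 @ C2 = rotate k (A1 @ C1)"
    then have "A2 @ C2 = A1 @ C1" using rotate_fix[OF d1 A1ne C1ne h[symmetric] lenA setA] by simp
    then have AA: "A2 = A1" "C2 = C1" using lenA by auto
    have "a1 = a2" "b1 = b2" using AA(1) la by (auto simp: A1_def A2_def append_eq_append_conv)
    moreover have "ws1 = ws2"
      using concat_Arr_inj[OF wf K0p(3) K0p(3) m1(3) m2(3)] AA(2) by (simp add: C1_def C2_def)
    ultimately show ?thesis using q1 q2 by simp
  next
    assume h: "A2 @ C2 = rotate k (rev (A1 @ C1))"
    have "rev (A1 @ C1) = rotate (length A1) (rev A1 @ rev C1)"
      using rotate_append[of "rev A1" "rev C1"] by simp
    then have h2: "rotate (k + length A1) (rev A1 @ rev C1) = A2 @ C2" using h by (simp add: rotate_rotate)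
    have "rotate (k + length A1) (rev A1 @ rev C1) = rev A1 @ rev C1"
      using rotate_fix[OF _ _ _ h2] d1 A1ne C1ne lenA setA by auto
    then have "A2 @ C2 = rev A1 @ rev C1" using h2 by simp
    then have "A2 = rev A1" using lenA by (simp add: append_eq_append_conv)
    then have "a2 @ b2 = rev b1 @ rev a1" by (simp add: A1_def A2_def)
    then have "hd a2 = hd (rev b1)" using a2ne a1ne by (metis hd_append2 rev_is_Nil_conv)
    moreover have "hd a2 \<in> set (Cs ! r)" using a2ne Or_props(1)[OF m2(1)] by (metis hd_in_set)
    moreover have "hd (rev b1) \<in> set (Cs ! s)" using a1ne Or_props(1)[OF m1(2)]
      by (metis hd_in_set rev_is_Nil_conv set_rev)
    ultimately show ?thesis using disj[OF rU rs(3)] by auto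
  qed
qed


lemma tour_fl:
  assumes "a \<noteq> []" "b \<noteq> []" "\<forall>w\<in>set ws. w \<noteq> []"
  shows "tour d (a @ b @ concat ws) = pth d a + d (last a) (hd b) + pth d b + chain d (last b) ws (hd a)"
proof -
  have "tour d ((a @ b) @ concat ws) = pth d ((a @ b) @ concat ws) + d (last ((a @ b) @ concat ws)) (hd a)"
    using assms(1) by (simp add: tour_def)
  also have "\<dots> = pth d (a @ b) + chain d (last (a @ b)) ws (hd a)"
    using chain_tour[of "a @ b" ws d "hd a"] assms by simp
  also have "\<dots> = pth d a + d (last a) (hd b) + pth d b + chain d (last b) ws (hd a)"
    using assms by (simp add: pth_append)
  finally show ?thesis by simp
qed

lemma sum_SS:
  assumes pc: "partial_circ X Cs" and m3: "length Cs \<ge> 3" and rs: "r < length Cs" "s < length Cs" "r \<noteq> s"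
    and sy: "symf d"
  defines "K0 \<equiv> {0..<length Cs} - {r} - {s}"
  defines "M \<equiv> real (length Cs) - 2"
  defines "V \<equiv> pth d (Cs ! r) + pth d (Cs ! s) + II d (nth Cs) K0 + Dp d (nth Cs) r s
     + ((\<Sum>t\<in>K0. Dp d (nth Cs) s t) + (\<Sum>t\<in>K0. Dp d (nth Cs) r t) + PP d (nth Cs) K0) / M"
  shows "(\<Sum>p\<in>SS Cs r s. tour d (fl p)) = real (card (SS Cs r s)) * V"
proof -
  define U where "U = {0..<length Cs}"
  have wf: "wfb (nth Cs) U" using pc_wfb[OF pc] by (simp add: U_def)
  have K0p: "K0 \<noteq> {}" "finite K0" "K0 \<subseteq> U" "real (card K0) = M"
    using K0_props[OF m3 rs] by (auto simp: K0_def U_def M_def)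
  have Mpos: "M > 0" using m3 by (simp add: M_def)
  have rU: "r \<in> U" "s \<in> U" using rs by (auto simp: U_def)
  have blk: "Cs ! t \<noteq> [] \<and> distinct (Cs ! t)" if "t \<in> U" for t using wf that unfolding wfb_def by blast
  define N0 where "N0 = real (card (Arr (nth Cs) K0))"
  define ca where "ca = real (card (Or (Cs ! r)))"
  define cb where "cb = real (card (Or (Cs ! s)))"
  define II0 where "II0 = II d (nth Cs) K0"
  define PP0 where "PP0 = PP d (nth Cs) K0"
  have wsne: "\<forall>w\<in>set ws. w \<noteq> []" if wsA: "ws \<in> Arr (nth Cs) K0" for ws
  proof
    fix w assume "w \<in> set ws"
    then obtain t where "t \<in> K0" "w \<in> Or (Cs ! t)" using Arr_elems[OF wsA] by blast
    then show "w \<noteq> []" using wfb_Or(1)[OF wf] K0p(3) by blast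
  qed
  have pthOr: "pth d w = pth d (Cs ! t)" if "w \<in> Or (Cs ! t)" for w t
    using Or_props(6)[OF that sy] .
  have inner: "(\<Sum>ws\<in>Arr (nth Cs) K0. tour d (a @ b @ concat ws))
      = N0 * (pth d (Cs ! r) + d (last a) (hd b) + pth d (Cs ! s) + II0
          + (\<Sum>t\<in>K0. Dt d (nth Cs) t (last b)) / M + (\<Sum>t\<in>K0. Dt d (nth Cs) t (hd a)) / M + PP0 / M)"
    if a: "a \<in> Or (Cs ! r)" and b: "b \<in> Or (Cs ! s)" for a b
  proof -
    have ane: "a \<noteq> []" "b \<noteq> []" using wfb_Or(1)[OF wf] a b rU by blast+
    have "(\<Sum>ws\<in>Arr (nth Cs) K0. tour d (a @ b @ concat ws))
        = (\<Sum>ws\<in>Arr (nth Cs) K0. (pth d a + d (last a) (hd b) + pth d b) + chain d (last b) ws (hd a))"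
      using tour_fl[OF ane] wsne by (intro sum.cong refl) simp
    also have "\<dots> = N0 * (pth d a + d (last a) (hd b) + pth d b) + N0 * (II0 + EE d (nth Cs) K0 (last b) (hd a))"
      using KK[OF wf sy K0p(2,3)] by (simp add: sum.distrib N0_def II0_def)
    also have "EE d (nth Cs) K0 (last b) (hd a)
        = (\<Sum>t\<in>K0. Dt d (nth Cs) t (last b)) / M + (\<Sum>t\<in>K0. Dt d (nth Cs) t (hd a)) / M + PP0 / M"
      using K0p(1,4) by (simp add: EE_def PP0_def sum.distrib add_divide_distrib)
    finally show ?thesis using pthOr[OF a] pthOr[OF b] by (simp add: algebra_simps)
  qed
  have muavg_Dt: "muavg (Cs ! u) (\<lambda>z. Dt d (nth Cs) t z) = Dp d (nth Cs) u t" for u t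
    by (simp add: Dp_def Dt_def)
  have sumb: "(\<Sum>b\<in>Or (Cs ! s). \<Sum>ws\<in>Arr (nth Cs) K0. tour d (a @ b @ concat ws))
      = N0 * cb * (pth d (Cs ! r) + Dt d (nth Cs) s (last a) + pth d (Cs ! s) + II0
          + (\<Sum>t\<in>K0. Dp d (nth Cs) s t) / M + (\<Sum>t\<in>K0. Dt d (nth Cs) t (hd a)) / M + PP0 / M)"
    if a: "a \<in> Or (Cs ! r)" for a
  proof -
    have "(\<Sum>b\<in>Or (Cs ! s). \<Sum>ws\<in>Arr (nth Cs) K0. tour d (a @ b @ concat ws))
      = (\<Sum>b\<in>Or (Cs ! s). N0 * (pth d (Cs ! r) + d (last a) (hd b) + pth d (Cs ! s) + II0
          + (\<Sum>t\<in>K0. Dt d (nth Cs) t (last b)) / M + (\<Sum>t\<in>K0. Dt d (nth Cs) t (hd a)) / M + PP0 / M))"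
      using inner[OF a] by simp
    also have "\<dots> = N0 * (cb * pth d (Cs ! r) + (\<Sum>b\<in>Or (Cs ! s). d (last a) (hd b)) + cb * pth d (Cs ! s) + cb * II0
          + (\<Sum>t\<in>K0. \<Sum>b\<in>Or (Cs ! s). Dt d (nth Cs) t (last b)) / M
          + cb * (\<Sum>t\<in>K0. Dt d (nth Cs) t (hd a)) / M + cb * PP0 / M)"
      by (simp add: sum.distrib sum_distrib_left[symmetric] sum_divide_distrib[symmetric]
          sum.swap[of _ "Or (Cs ! s)"] cb_def algebra_simps)
    also have "(\<Sum>b\<in>Or (Cs ! s). d (last a) (hd b)) = cb * Dt d (nth Cs) s (last a)"
      using conjunct1[OF mu_sum_gen[of "Cs ! s" "\<lambda>i. d (last a) i"]] blk rU by (simp add: cb_def Dt_def)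
    also have "(\<Sum>t\<in>K0. \<Sum>b\<in>Or (Cs ! s). Dt d (nth Cs) t (last b)) = cb * (\<Sum>t\<in>K0. Dp d (nth Cs) s t)"
    proof -
      have "(\<Sum>b\<in>Or (Cs ! s). Dt d (nth Cs) t (last b)) = cb * Dp d (nth Cs) s t" for t
        using conjunct2[OF mu_sum_gen[of "Cs ! s" "\<lambda>z. Dt d (nth Cs) t z"]] blk rU muavg_Dt
        by (simp add: cb_def)
      then show ?thesis by (simp add: sum_distrib_left)
    qed
    finally show ?thesis by (simp add: algebra_simps)
  qed
  have suma: "(\<Sum>a\<in>Or (Cs ! r). \<Sum>b\<in>Or (Cs ! s). \<Sum>ws\<in>Arr (nth Cs) K0. tour d (a @ b @ concat ws))
      = N0 * cb * ca * V"
  proof -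
    have "(\<Sum>a\<in>Or (Cs ! r). \<Sum>b\<in>Or (Cs ! s). \<Sum>ws\<in>Arr (nth Cs) K0. tour d (a @ b @ concat ws))
      = (\<Sum>a\<in>Or (Cs ! r). N0 * cb * (pth d (Cs ! r) + Dt d (nth Cs) s (last a) + pth d (Cs ! s) + II0
          + (\<Sum>t\<in>K0. Dp d (nth Cs) s t) / M + (\<Sum>t\<in>K0. Dt d (nth Cs) t (hd a)) / M + PP0 / M))"
      using sumb by simp
    also have "\<dots> = N0 * cb * (ca * pth d (Cs ! r) + (\<Sum>a\<in>Or (Cs ! r). Dt d (nth Cs) s (last a)) + ca * pth d (Cs ! s) + ca * II0
          + ca * (\<Sum>t\<in>K0. Dp d (nth Cs) s t) / M + (\<Sum>t\<in>K0. \<Sum>a\<in>Or (Cs ! r). Dt d (nth Cs) t (hd a)) / M + ca * PP0 / M)"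
      by (simp add: sum.distrib sum_distrib_left[symmetric] sum_divide_distrib[symmetric]
          sum.swap[of _ "Or (Cs ! r)"] ca_def algebra_simps)
    also have "(\<Sum>a\<in>Or (Cs ! r). Dt d (nth Cs) s (last a)) = ca * Dp d (nth Cs) r s"
      using conjunct2[OF mu_sum_gen[of "Cs ! r" "\<lambda>z. Dt d (nth Cs) s z"]] blk rU muavg_Dt
      by (simp add: ca_def)
    also have "(\<Sum>t\<in>K0. \<Sum>a\<in>Or (Cs ! r). Dt d (nth Cs) t (hd a)) = ca * (\<Sum>t\<in>K0. Dp d (nth Cs) r t)"
    proof -
      have "(\<Sum>a\<in>Or (Cs ! r). Dt d (nth Cs) t (hd a)) = ca * Dp d (nth Cs) r t" for t
        using conjunct1[OF mu_sum_gen[of "Cs ! r" "\<lambda>z. Dt d (nth Cs) t z"]] blk rU muavg_Dt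
        by (simp add: ca_def)
      then show ?thesis by (simp add: sum_distrib_left)
    qed
    finally show ?thesis by (simp add: V_def II0_def PP0_def algebra_simps add_divide_distrib)
  qed
  have "(\<Sum>p\<in>SS Cs r s. tour d (fl p))
      = (\<Sum>a\<in>Or (Cs ! r). \<Sum>b\<in>Or (Cs ! s). \<Sum>ws\<in>Arr (nth Cs) K0. tour d (a @ b @ concat ws))"
    unfolding SS_def K0_def fl_def
    by (rule sym) (simp add: sum.cartesian_product split_beta)
  also have "\<dots> = N0 * cb * ca * V" using suma .
  also have "real (card (SS Cs r s)) = ca * cb * N0"
    by (simp add: SS_def card_cartesian_product ca_def cb_def N0_def K0_def)
  ultimately show ?thesis by (simp add: algebra_simps)
qed


definition dX :: "nat set \<Rightarrow> (nat \<Rightarrow> nat \<Rightarrow> real) \<Rightarrow> nat \<Rightarrow> nat \<Rightarrow> real" where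
  "dX X d i j = (if i \<in> X \<and> j \<in> X then d i j else 0)"

lemma dX_sym: "dissim X d \<Longrightarrow> symf (dX X d)"
  unfolding symf_def dX_def dissim_def by auto

lemma split3a:
  fixes f :: "nat \<Rightarrow> real"
  assumes "r < m" "s < m" "r \<noteq> s"
  shows "(\<Sum>t\<in>{0..<m}. f t) = f r + f s + (\<Sum>t\<in>{0..<m} - {r} - {s}. f t)"
proof -
  have e1: "{0..<m} = insert r (insert s ({0..<m} - {r} - {s}))" using assms(1,2) by auto
  have "(\<Sum>t\<in>insert r (insert s ({0..<m} - {r} - {s})). f t) = f r + f s + (\<Sum>t\<in>{0..<m} - {r} - {s}. f t)"
    using assms(3) by (simp add: sum.insert_remove)
  then show ?thesis using e1 by simp
qed

lemma split3b:
  fixes f :: "nat \<Rightarrow> real"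
  assumes "r < m" "s < m" "r \<noteq> s"
  shows "(\<Sum>t\<in>{0..<m} - {r}. f t) = f s + (\<Sum>t\<in>{0..<m} - {r} - {s}. f t)"
proof -
  have e1: "{0..<m} - {r} = insert s ({0..<m} - {r} - {s})" using assms by auto
  have "(\<Sum>t\<in>insert s ({0..<m} - {r} - {s}). f t) = f s + (\<Sum>t\<in>{0..<m} - {r} - {s}. f t)"
    by (simp add: sum.insert_remove)
  then show ?thesis using e1 by simp
qed

lemma split3c:
  fixes f :: "nat \<Rightarrow> real"
  assumes "r < m" "s < m" "r \<noteq> s"
  shows "(\<Sum>t\<in>{0..<m} - {s}. f t) = f r + (\<Sum>t\<in>{0..<m} - {r} - {s}. f t)"
proof -
  have e1: "{0..<m} - {s} = insert r ({0..<m} - {r} - {s})" using assms by auto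
  have "(\<Sum>t\<in>insert r ({0..<m} - {r} - {s}). f t) = f r + (\<Sum>t\<in>{0..<m} - {r} - {s}. f t)"
    by (simp add: sum.insert_remove)
  then show ?thesis using e1 by simp
qed

lemma split3d:
  fixes f :: "nat \<Rightarrow> real"
  assumes "r < m" "s < m" "r \<noteq> s" "t \<in> {0..<m} - {r} - {s}"
  shows "(\<Sum>u\<in>{0..<m} - {t}. f u) = f r + f s + (\<Sum>u\<in>({0..<m} - {r} - {s}) - {t}. f u)"
proof -
  have e1: "{0..<m} - {t} = insert r (insert s (({0..<m} - {r} - {s}) - {t}))" using assms by auto
  have "(\<Sum>u\<in>insert r (insert s (({0..<m} - {r} - {s}) - {t})). f u) = f r + f s + (\<Sum>u\<in>({0..<m} - {r} - {s}) - {t}. f u)"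
    using assms(3) by (simp add: sum.insert_remove)
  then show ?thesis using e1 by simp
qed

lemma main_eq:
  fixes d :: "nat \<Rightarrow> nat \<Rightarrow> real" and Cs :: "nat list list"
  assumes dis: "dissim X d" and pc: "partial_circ X Cs" and m3: "length Cs \<ge> 3"
    and rs: "r < length Cs" "s < length Cs" "r \<noteq> s"
  shows "l_join X d Cs r s = (1 / (2 * (real (length Cs) - 2))) * Q_delta d Cs r s + T_const d Cs"
proof -
  define d2 where "d2 = dX X d"
  have sy: "symf d2" using dX_sym[OF dis] by (simp add: d2_def)
  define m where "m = length Cs"
  define U where "U = {0..<m}"
  define K0 where "K0 = U - {r} - {s}"
  define M where "M = real m - 2"
  have Mpos: "M > 0" using m3 by (simp add: M_def m_def)
  have wf: "wfb (nth Cs) U" using pc_wfb[OF pc] by (simp add: U_def m_def)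
  have XU: "X = (\<Union>t\<in>U. set (Cs ! t))" using pc_set[OF pc] by (simp add: U_def m_def)
  have inX: "set (Cs ! t) \<subseteq> X" if "t < m" for t using XU that by (auto simp: U_def)
  have dd2: "d i j = d2 i j" if "i \<in> X" "j \<in> X" for i j using that by (simp add: d2_def dX_def)
  define F where "F = (\<lambda>p :: nat list \<times> nat list \<times> nat list list. circ_class (fl p))"
  have img: "o_join X Cs r s = F ` SS Cs r s"
    using o_sub[OF pc m3 rs] o_sup[OF pc rs] by (auto simp: F_def)
  have inj: "inj_on F (SS Cs r s)" using SS_inj[OF pc m3 rs] by (simp add: F_def)
  have cht: "class_half_tour d (F p) = tour d2 (fl p) / 2" if p: "p \<in> SS Cs r s" for p
  proof -
    have pp: "distinct (fl p)" "set (fl p) = X" "fl p \<noteq> []" using SS_props[OF pc rs p] by auto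
    define zs where "zs = (SOME ys. ys \<in> F p)"
    have zs: "zs \<in> circ_class (fl p)" unfolding zs_def F_def using class_self by (rule someI)
    have zsp: "set zs = X" "zs \<noteq> []" "tour d2 zs = tour d2 (fl p)"
      using class_props[OF zs] pp sy by auto
    have "half_tour d zs = half_tour d2 zs"
      unfolding half_tour_def
    proof (intro arg_cong[where f = "\<lambda>x. 1/2 * x"] sum.cong refl)
      fix k assume k: "k \<in> {..<length zs}"
      have "zs ! k \<in> X" "zs ! ((k + 1) mod length zs) \<in> X" using k zsp(1,2) by auto
      then show "d (zs ! k) (zs ! ((k + 1) mod length zs)) = d2 (zs ! k) (zs ! ((k + 1) mod length zs))"
        using dd2 by blast
    qed
    also have "\<dots> = tour d2 zs / 2" using half_tour_tour[OF zsp(2)] .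
    finally show ?thesis using zsp(3) by (simp add: class_half_tour_def zs_def)
  qed
  have fin: "finite (SS Cs r s)"
    using K0_props[OF m3 rs] by (simp add: SS_def Or_finite Arr_finite)
  have cpos: "real (card (SS Cs r s)) > 0"
  proof -
    have "real (card (Arr (nth Cs) K0)) = fact (card K0) * (\<Prod>t\<in>K0. real (card (Or (Cs ! t))))"
    proof -
      have "finite K0" "K0 \<subseteq> U" by (auto simp: K0_def U_def)
      then show ?thesis using N_closed[OF wf] by blast
    qed
    moreover have "(\<Prod>t\<in>K0. real (card (Or (Cs ! t)))) > 0"
      by (intro prod_pos) (metis Or_finite Or_self card_gt_0_iff empty_iff of_nat_0_less_iff)
    ultimately have "real (card (Arr (nth Cs) K0)) > 0" by simp
    moreover have "card (Or (Cs ! r)) > 0" "card (Or (Cs ! s)) > 0"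
      by (metis Or_finite Or_self card_gt_0_iff empty_iff)+
    ultimately show ?thesis
      by (simp add: SS_def card_cartesian_product K0_def U_def m_def)
  qed
  define V where "V = pth d2 (Cs ! r) + pth d2 (Cs ! s) + II d2 (nth Cs) K0 + Dp d2 (nth Cs) r s
     + ((\<Sum>t\<in>K0. Dp d2 (nth Cs) s t) + (\<Sum>t\<in>K0. Dp d2 (nth Cs) r t) + PP d2 (nth Cs) K0) / M"
  have sumSS: "(\<Sum>p\<in>SS Cs r s. tour d2 (fl p)) = real (card (SS Cs r s)) * V"
    using sum_SS[OF pc m3 rs sy] by (simp add: V_def K0_def U_def M_def m_def)
  have lV: "l_join X d Cs r s = V / 2"
  proof -
    have "(\<Sum>c\<in>o_join X Cs r s. class_half_tour d c) = (\<Sum>p\<in>SS Cs r s. class_half_tour d (F p))"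
      unfolding img by (rule sum.reindex[OF inj, unfolded comp_def])
    also have "\<dots> = (\<Sum>p\<in>SS Cs r s. tour d2 (fl p) / 2)" by (rule sum.cong[OF refl cht])
    also have "\<dots> = real (card (SS Cs r s)) * V / 2" using sumSS by (simp add: sum_divide_distrib[symmetric])
    finally have s1: "(\<Sum>c\<in>o_join X Cs r s. class_half_tour d c) = real (card (SS Cs r s)) * V / 2" .
    have c1: "card (o_join X Cs r s) = card (SS Cs r s)" unfolding img using card_image[OF inj] .
    show ?thesis unfolding l_join_def s1 c1 using cpos by simp
  qed
  define Dq where "Dq = Dp d2 (nth Cs)"
  have bd: "blk_dist d Cs t u = Dq t u" if "t < m" "u < m" for t u
  proof -
    have "blk_dist d Cs t u = (\<Sum>i\<in>set (Cs ! t). \<Sum>j\<in>set (Cs ! u). mu_block (Cs ! t) i * mu_block (Cs ! u) j * d2 i j)"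
      unfolding blk_dist_def
    proof (intro sum.cong refl)
      fix i j assume i: "i \<in> set (Cs ! t)" and j: "j \<in> set (Cs ! u)"
      have "mu Cs i = mu_block (Cs ! t) i" using mu_eq[OF pc _ i] that by (simp add: m_def)
      moreover have "mu Cs j = mu_block (Cs ! u) j" using mu_eq[OF pc _ j] that by (simp add: m_def)
      moreover have "d i j = d2 i j" using dd2 inX that i j by blast
      ultimately show "mu Cs i * mu Cs j * d i j = mu_block (Cs ! t) i * mu_block (Cs ! u) j * d2 i j" by simp
    qed
    also have "\<dots> = Dq t u"
      by (simp add: Dq_def Dp_def muavg_def sum_distrib_left algebra_simps)
    finally show ?thesis .
  qed
  have Dsym: "Dq t u = Dq u t" for t u using Dp_sym[OF sy] by (simp add: Dq_def)
  have rm: "r < m" "s < m" using rs by (auto simp: m_def)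
  have K0U: "K0 = {0..<m} - {r} - {s}" by (simp add: K0_def U_def)
  define R where "R = (\<Sum>t\<in>K0. Dq r t)"
  define S' where "S' = (\<Sum>t\<in>K0. Dq s t)"
  define P0 where "P0 = PP d2 (nth Cs) K0"
  define Pt where "Pt = (\<Sum>t\<in>U. pth d2 (Cs ! t))"
  have Q: "Q_delta d Cs r s = M * Dq r s - (Dq r s + R) - (Dq r s + S')"
  proof -
    have "(\<Sum>t\<in>{0..<length Cs} - {r}. blk_dist d Cs r t) = (\<Sum>t\<in>{0..<m} - {r}. Dq r t)"
      using bd rm by (intro sum.cong) (auto simp: m_def)
    also have "\<dots> = Dq r s + R" using split3b[OF rm rs(3)] by (simp add: R_def K0U)
    finally have A: "(\<Sum>t\<in>{0..<length Cs} - {r}. blk_dist d Cs r t) = Dq r s + R" .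
    have "(\<Sum>t\<in>{0..<length Cs} - {s}. blk_dist d Cs s t) = (\<Sum>t\<in>{0..<m} - {s}. Dq s t)"
      using bd rm by (intro sum.cong) (auto simp: m_def)
    also have "\<dots> = Dq s r + S'" using split3c[OF rm rs(3)] by (simp add: S'_def K0U)
    finally have B: "(\<Sum>t\<in>{0..<length Cs} - {s}. blk_dist d Cs s t) = Dq r s + S'" using Dsym by simp
    show ?thesis unfolding Q_delta_def A B using bd rm by (simp add: M_def m_def)
  qed
  have T: "T_const d Cs = 1/2 * Pt + 1 / M * (1/2 * (2 * Dq r s + 2 * R + 2 * S' + P0))"
  proof -
    have p1: "(\<Sum>B\<leftarrow>Cs. \<Sum>k<length B - 1. d (B ! k) (B ! (k + 1))) = Pt"
    proof -
      have "(\<Sum>B\<leftarrow>Cs. \<Sum>k<length B - 1. d (B ! k) (B ! (k + 1))) = (\<Sum>B\<leftarrow>Cs. pth d B)"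
        by (simp add: pth_nth)
      also have "\<dots> = (\<Sum>t\<in>{0..<m}. pth d (Cs ! t))"
        by (simp add: sum_list_sum_nth m_def)
      also have "\<dots> = Pt" unfolding Pt_def U_def
      proof (intro sum.cong refl pth_cong ballI)
        fix t i j assume t: "t \<in> {0..<m}" and i: "i \<in> set (Cs ! t)" and j: "j \<in> set (Cs ! t)"
        then show "d i j = d2 i j" using dd2 inX by auto
      qed
      finally show ?thesis .
    qed
    have p2: "(\<Sum>u<length Cs. \<Sum>t<u. blk_dist d Cs t u) = (\<Sum>u<m. \<Sum>t<u. Dq t u)"
      using bd by (intro sum.cong) (auto simp: m_def)
    also have "\<dots> = 1/2 * (\<Sum>t\<in>{..<m}. \<Sum>u\<in>{..<m} - {t}. Dq t u)"
      using sum_tri[of Dq m] Dsym by simp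
    also have "(\<Sum>t\<in>{..<m}. \<Sum>u\<in>{..<m} - {t}. Dq t u) = 2 * Dq r s + 2 * R + 2 * S' + P0"
    proof -
      have "(\<Sum>t\<in>{..<m}. \<Sum>u\<in>{..<m} - {t}. Dq t u) = (\<Sum>t\<in>{0..<m}. \<Sum>u\<in>{0..<m} - {t}. Dq t u)"
        by (simp add: lessThan_atLeast0)
      also have "\<dots> = (\<Sum>u\<in>{0..<m} - {r}. Dq r u) + (\<Sum>u\<in>{0..<m} - {s}. Dq s u)
           + (\<Sum>t\<in>K0. \<Sum>u\<in>{0..<m} - {t}. Dq t u)"
        using split3a[OF rm rs(3)] by (simp add: K0U)
      also have "(\<Sum>u\<in>{0..<m} - {r}. Dq r u) = Dq r s + R"
        using split3b[OF rm rs(3)] by (simp add: R_def K0U)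
      also have "(\<Sum>u\<in>{0..<m} - {s}. Dq s u) = Dq r s + S'"
        using split3c[OF rm rs(3), of "Dq s"] Dsym by (simp add: S'_def K0U)
      also have "(\<Sum>t\<in>K0. \<Sum>u\<in>{0..<m} - {t}. Dq t u) = (\<Sum>t\<in>K0. Dq t r + Dq t s + (\<Sum>u\<in>K0 - {t}. Dq t u))"
      proof (intro sum.cong refl)
        fix t assume t: "t \<in> K0"
        show "(\<Sum>u\<in>{0..<m} - {t}. Dq t u) = Dq t r + Dq t s + (\<Sum>u\<in>K0 - {t}. Dq t u)"
          using split3d[OF rm rs(3), of t "Dq t"] t unfolding K0U by simp
      qed
      also have "\<dots> = R + S' + P0"
        by (simp add: sum.distrib R_def S'_def P0_def PP_def Dq_def Dsym[unfolded Dq_def])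
      finally show ?thesis by simp
    qed
    finally have p2': "(\<Sum>u<length Cs. \<Sum>t<u. blk_dist d Cs t u) = 1/2 * (2 * Dq r s + 2 * R + 2 * S' + P0)" .
    show ?thesis unfolding T_const_def p1 p2' by (simp add: M_def m_def)
  qed
  have Vp: "V = Pt + Dq r s + (S' + R + P0) / M"
  proof -
    have "Pt = pth d2 (Cs ! r) + pth d2 (Cs ! s) + II d2 (nth Cs) K0"
      unfolding Pt_def U_def II_def using split3a[OF rm rs(3)] by (simp add: K0U)
    then show ?thesis by (simp add: V_def Dq_def R_def S'_def P0_def)
  qed
  have h: "(1 / (2 * (real (length Cs) - 2))) * Q_delta d Cs r s + T_const d Cs = V / 2"
    unfolding Q T Vp using Mpos by (simp add: M_def[symmetric] m_def[symmetric] field_simps)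
  show ?thesis by (metis lV h)
qed


theorem mainTheorem4:
  fixes n :: nat and d :: "nat \<Rightarrow> nat \<Rightarrow> real" and Cs :: "nat list list" and r s :: nat
  assumes "n \<ge> 3"
    and "dissim {1..n} d"
    and "partial_circ {1..n} Cs"
    and "length Cs \<ge> 3"
    and "r < length Cs" and "s < length Cs" and "r \<noteq> s"
  shows "l_join {1..n} d Cs r s
           = (1 / (2 * (real (length Cs) - 2))) * Q_delta d Cs r s + T_const d Cs
         \<and> ((\<forall>r' s'. r' < length Cs \<longrightarrow> s' < length Cs \<longrightarrow> r' \<noteq> s' \<longrightarrow>
              l_join {1..n} d Cs r s \<le> l_join {1..n} d Cs r' s')
         \<longleftrightarrow> (\<forall>r' s'. r' < length Cs \<longrightarrow> s' < length Cs \<longrightarrow> r' \<noteq> s' \<longrightarrow>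
              Q_delta d Cs r s \<le> Q_delta d Cs r' s'))"
proof -
  define c where "c = 1 / (2 * (real (length Cs) - 2))"
  have cpos: "c > 0" using assms(4) by (simp add: c_def)
  have eq: "l_join {1..n} d Cs r' s' = c * Q_delta d Cs r' s' + T_const d Cs"
    if "r' < length Cs" "s' < length Cs" "r' \<noteq> s'" for r' s'
    using main_eq[OF assms(2,3,4) that] by (simp add: c_def)
  have iff: "l_join {1..n} d Cs r s \<le> l_join {1..n} d Cs r' s' \<longleftrightarrow> Q_delta d Cs r s \<le> Q_delta d Cs r' s'"
    if "r' < length Cs" "s' < length Cs" "r' \<noteq> s'" for r' s'
    using eq[OF that] eq[OF assms(5,6,7)] cpos by simp
  show ?thesis using eq[OF assms(5,6,7)] iff by (simp add: c_def)
qed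

end
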